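(* Let $0\le a\le b\le 1$ and $r\in(0,3)$, and let $X = \mathcal{H}/\Gamma$ be a compact hyperbolic surface with $\mathrm{InjRad}(X) > r$. For any $t \geq \frac1{200}$ and $L \geq 2^{12}t^2$, \[ \mathcal{R}_K(X,t,a,b) = O\!\left(\frac{t^3}{r^4}\exp(-t^2\delta_b^2)\left[e^{-L} + \frac{\mathrm{Vol}_X(X^-(L))}{\mathrm{Vol}_X(X)}\,e^{L}\right]\right), \] where $\delta_b = \max(\frac14-b,0)$ and $X^-(L) = \{z\in X: \mathrm{InjRad}_z(X) < L\}$.
   Context: $\mathcal{H}$ is the hyperbolic upper half-plane with distance $d_{\mathcal H}$ and area measure $\mu_{\mathcal H}$; $X=\mathcal{H}/\Gamma$ with $\Gamma\subset\mathrm{PSL}_2(\mathbb{R})$ a cocompact Fuchsian group, $D$ a fundamental domain, $\mathrm{Vol}_X$ the area on $X$, $\mathrm{InjRad}_z(X)$ the injectivity radius at $z$ and $\mathrm{InjRad}(X)=\inf_z\mathrm{InjRad}_z(X)$. For $0\le a\le b$, $t>0$: $f_t(\lambda) = \frac{t}{\sqrt\pi}\int_a^b e^{-t^2(\lambda-\mu)^2}d\mu$, $h_t(r)=f_t(\frac14+r^2)$, $g_t(u) = \frac1{2\pi}\int_{\mathbb R}h_t(r)e^{iru}dr$, $K_t(\rho) = -\frac{1}{\sqrt2\pi}\int_\rho^\infty\frac{g_t'(u)}{\sqrt{\cosh u-\cosh\rho}}du$, and \[ \mathcal{R}_K(X,t,a,b) = \frac{1}{\mathrm{Vol}_X(X)}\int_D\sum_{\gamma\in\Gamma\setminus\{\mathrm{id}\}}K_t\big(d_{\mathcal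 H}(z,\gamma\cdot z)\big)\,d\mu_{\mathcal H}(z). \] $T_1 = O(T_2)$ means $|T_1|\le CT_2$ with a universal constant $C$. *)

theory Defs
  imports "HOL-Analysis.Analysis"
begin

definition Hplane :: "complex set" where
  "Hplane = {z. 0 < Im z}"

definition hdist :: "complex \<Rightarrow> complex \<Rightarrow> real" where
  "hdist z w = arcosh (1 + (cmod (z - w))\<^sup>2 / (2 * Im z * Im w))"

definition muH :: "complex measure" where
  "muH = density lborel (\<lambda>z. ennreal (indicator Hplane z / (Im z)\<^sup>2))"

text \<open>An element of PSL(2,R), represented by the Moebius map it induces on H
  (identity outside H, so that two elements are equal iff they agree on H,
  and composition of maps is the group product).\<close>
definition hmob :: "real \<Rightarrow> real \<Rightarrow> real \<Rightarrow> real \<Rightarrow> complex \<Rightarrow> complex" where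
  "hmob a b c d = (\<lambda>z. if 0 < Im z then (of_real a * z + of_real b) / (of_real c * z + of_real d) else z)"

definition PSL2 :: "(complex \<Rightarrow> complex) set" where
  "PSL2 = {hmob a b c d | a b c d. a * d - b * c = 1}"

definition subgroup_PSL2 :: "(complex \<Rightarrow> complex) set \<Rightarrow> bool" where
  "subgroup_PSL2 \<Gamma> \<longleftrightarrow> \<Gamma> \<subseteq> PSL2 \<and> id \<in> \<Gamma> \<and>
     (\<forall>\<gamma>\<in>\<Gamma>. \<forall>\<delta>\<in>\<Gamma>. \<gamma> \<circ> \<delta> \<in> \<Gamma>) \<and> (\<forall>\<gamma>\<in>\<Gamma>. \<exists>\<delta>\<in>\<Gamma>. \<gamma> \<circ> \<delta> = id)"

text \<open>Discreteness in PSL(2,R): the identity is isolated, i.e. every matrix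
  representative of a non-identity element stays uniformly away from I.\<close>
definition fuchsian :: "(complex \<Rightarrow> complex) set \<Rightarrow> bool" where
  "fuchsian \<Gamma> \<longleftrightarrow> subgroup_PSL2 \<Gamma> \<and>
     (\<exists>\<epsilon>>0. \<forall>\<gamma>\<in>\<Gamma> - {id}. \<forall>a b c d. a * d - b * c = 1 \<and> \<gamma> = hmob a b c d \<longrightarrow>
        \<epsilon> \<le> \<bar>a - 1\<bar> + \<bar>b\<bar> + \<bar>c\<bar> + \<bar>d - 1\<bar>)"

text \<open>Cocompact: the quotient H/Gamma is compact, i.e. some compact subset of H
  maps onto it.\<close>
definition cocompact :: "(complex \<Rightarrow> complex) set \<Rightarrow> bool" where
  "cocompact \<Gamma> \<longleftrightarrow> (\<exists>K. compact K \<and> K \<subseteq> Hplane \<and> Hplane \<subseteq> (\<Union>\<gamma>\<in>\<Gamma>. \<gamma> ` K))"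

definition fundamental_domain :: "(complex \<Rightarrow> complex) set \<Rightarrow> complex set \<Rightarrow> bool" where
  "fundamental_domain \<Gamma> D \<longleftrightarrow> D \<in> sets borel \<and> D \<subseteq> Hplane \<and>
     (\<Union>\<gamma>\<in>\<Gamma>. \<gamma> ` D) = Hplane \<and>
     (\<forall>\<gamma>\<in>\<Gamma> - {id}. emeasure muH (D \<inter> \<gamma> ` D) = 0)"

definition injrad_at :: "(complex \<Rightarrow> complex) set \<Rightarrow> complex \<Rightarrow> real" where
  "injrad_at \<Gamma> z = (INF \<gamma>\<in>\<Gamma> - {id}. hdist z (\<gamma> z)) / 2"

definition injrad :: "(complex \<Rightarrow> complex) set \<Rightarrow> real" where
  "injrad \<Gamma> = (INF z\<in>Hplane. injrad_at \<Gamma> z)"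

text \<open>Vol_X(X), computed on a fundamental domain.\<close>
definition volX :: "complex set \<Rightarrow> real" where
  "volX D = measure muH D"

text \<open>Vol_X(X^-(L)), X^-(L) = {z. InjRad_z(X) < L}, computed on a fundamental domain.\<close>
definition vol_thin :: "(complex \<Rightarrow> complex) set \<Rightarrow> complex set \<Rightarrow> real \<Rightarrow> real" where
  "vol_thin \<Gamma> D L = measure muH {z\<in>D. injrad_at \<Gamma> z < L}"

definition f_t :: "real \<Rightarrow> real \<Rightarrow> real \<Rightarrow> real \<Rightarrow> real" where
  "f_t a b t lam = t / sqrt pi * (LBINT m=a..b. exp (- (t\<^sup>2 * (lam - m)\<^sup>2)))"

definition h_t :: "real \<Rightarrow> real \<Rightarrow> real \<Rightarrow> real \<Rightarrow> real" where
  "h_t a b t r = f_t a b t (1/4 + r\<^sup>2)"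

definition g_t :: "real \<Rightarrow> real \<Rightarrow> real \<Rightarrow> real \<Rightarrow> complex" where
  "g_t a b t u = complex_of_real (1 / (2 * pi)) *
     (LINT r|lborel. complex_of_real (h_t a b t r) * exp (\<i> * complex_of_real (r * u)))"

definition K_t :: "real \<Rightarrow> real \<Rightarrow> real \<Rightarrow> real \<Rightarrow> complex" where
  "K_t a b t \<rho> = - complex_of_real (1 / (sqrt 2 * pi)) *
     (LINT u:{\<rho><..}|lborel. vector_derivative (g_t a b t) (at u) /
        complex_of_real (sqrt (cosh u - cosh \<rho>)))"

definition R_K :: "(complex \<Rightarrow> complex) set \<Rightarrow> complex set \<Rightarrow> real \<Rightarrow> real \<Rightarrow> real \<Rightarrow> complex" where
  "R_K \<Gamma> D t a b = complex_of_real (1 / volX D) *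
     (LINT z:D|muH. infsum (\<lambda>\<gamma>. K_t a b t (hdist z (\<gamma> z))) (\<Gamma> - {id}))"

end

theory Submission
  imports Defs "HOL-Complex_Analysis.Complex_Analysis"
begin

lemma hi_exp_pos: "((\<lambda>x::real. exp (- x)) has_integral 1) {0..}"
  using has_integral_exp_minus_to_infinity[of 1 0] by simp

lemma nn_exp_pos: "(\<integral>\<^sup>+x. ennreal (indicator {0..} x * exp (- x)) \<partial>lborel) = 1"
  using nn_integral_has_integral_lebesgue[OF _ hi_exp_pos] by simp

lemma nn_exp_abs: "(\<integral>\<^sup>+x. ennreal (exp (- \<bar>x\<bar>)) \<partial>lborel) = 2"
proof -
  have "(\<integral>\<^sup>+x. ennreal (exp (- \<bar>x\<bar>)) \<partial>lborel) \<le>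
     (\<integral>\<^sup>+x. ennreal (indicator {0..} x * exp (- x)) + ennreal (indicator {0..} (-x) * exp (- (-x))) \<partial>lborel)"
    by (intro nn_integral_mono) (auto simp: indicator_def ennreal_plus[symmetric] simp del: ennreal_plus)
  also have "\<dots> = (\<integral>\<^sup>+x. ennreal (indicator {0..} x * exp (- x)) \<partial>lborel) + (\<integral>\<^sup>+x. ennreal (indicator {0..} (-x) * exp (- (-x))) \<partial>lborel)"
    by (intro nn_integral_add) auto
  also have "(\<integral>\<^sup>+x. ennreal (indicator {0..} (-x) * exp (- (-x))) \<partial>lborel) = (\<integral>\<^sup>+x. ennreal (indicator {0..} x * exp (- x)) \<partial>lborel)"
    using nn_integral_real_affine[of "\<lambda>x. ennreal (indicator {0..} x * exp (- x))" "-1" 0] by simp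
  finally have le: "(\<integral>\<^sup>+x. ennreal (exp (- \<bar>x\<bar>)) \<partial>lborel) \<le> 2" using nn_exp_pos by simp
  have "(\<integral>\<^sup>+x. ennreal (exp (- \<bar>x\<bar>)) \<partial>lborel) \<ge>
     (\<integral>\<^sup>+x. ennreal (indicator {0..} x * exp (- x)) + ennreal (indicator {0<..} (-x) * exp (- (-x))) \<partial>lborel)"
    by (intro nn_integral_mono) (auto simp: indicator_def ennreal_plus[symmetric] simp del: ennreal_plus)
  also have "(\<integral>\<^sup>+x. ennreal (indicator {0..} x * exp (- x)) + ennreal (indicator {0<..} (-x) * exp (- (-x))) \<partial>lborel)
     = (\<integral>\<^sup>+x. ennreal (indicator {0..} x * exp (- x)) \<partial>lborel) + (\<integral>\<^sup>+x. ennreal (indicator {0<..} (-x) * exp (- (-x))) \<partial>lborel)"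
    by (intro nn_integral_add) auto
  also have "(\<integral>\<^sup>+x. ennreal (indicator {0<..} (-x) * exp (- (-x))) \<partial>lborel) = (\<integral>\<^sup>+x. ennreal (indicator {0<..} x * exp (- x)) \<partial>lborel)"
    using nn_integral_real_affine[of "\<lambda>x. ennreal (indicator {0<..} x * exp (- x))" "-1" 0] by simp
  also have "(\<integral>\<^sup>+x. ennreal (indicator {0<..} x * exp (- x)) \<partial>lborel) = (\<integral>\<^sup>+x. ennreal (indicator {0..} x * exp (- x)) \<partial>lborel)"
    by (intro nn_integral_cong_AE) (auto intro!: AE_I[where N="{0}"] simp: indicator_def)
  finally have "(\<integral>\<^sup>+x. ennreal (exp (- \<bar>x\<bar>)) \<partial>lborel) \<ge> 2" using nn_exp_pos by simp
  with le show ?thesis by (rule antisym)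
qed

lemma integrable_exp_abs: "integrable lborel (\<lambda>x::real. exp (- \<bar>x\<bar>))"
  by (intro integrableI_bounded) (auto simp: nn_exp_abs)

lemma integral_exp_abs: "(LINT x|lborel. exp (- \<bar>x::real\<bar>)) = 2"
  using nn_exp_abs by (subst integral_eq_nn_integral) auto

lemma contour_integral_linepath_horiz:
  fixes f :: "complex \<Rightarrow> complex"
  assumes "a < b"
  shows "contour_integral (linepath (Complex a c) (Complex b c)) f = integral {a..b} (\<lambda>x. f (Complex x c))"
proof -
  have "contour_integral (linepath (Complex a c) (Complex b c)) f =
        contour_integral (linepath (of_real a) (of_real b)) (\<lambda>w. f (w + \<i> * of_real c))"
    unfolding contour_integral_integral
    by (intro integral_cong) (simp add: linepath_def Complex_eq scaleR_conv_of_real algebra_simps)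
  also have "\<dots> = integral {a..b} (\<lambda>x. f (of_real x + \<i> * of_real c))"
    using assms by (subst contour_integral_linepath_Reals_eq) auto
  also have "\<dots> = integral {a..b} (\<lambda>x. f (Complex x c))"
    by (simp add: Complex_eq)
  finally show ?thesis .
qed

lemma rect_identity:
  fixes F :: "complex \<Rightarrow> complex"
  assumes holo: "F holomorphic_on UNIV" and R: "R > 0" and s: "s > 0"
  shows "integral {-R..R} (\<lambda>x. F (of_real x)) + \<i> * integral {0..s} (\<lambda>y. F (Complex R y))
       - integral {-R..R} (\<lambda>x. F (Complex x s)) - \<i> * integral {0..s} (\<lambda>y. F (Complex (-R) y)) = 0"
proof -
  have cont: "continuous_on UNIV F" using holo holomorphic_on_imp_continuous_on by blast
  have ci: "F contour_integrable_on linepath p q" for p q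
    by (rule contour_integrable_continuous_linepath) (use cont continuous_on_subset in blast)
  define a1 a2 a3 a4 where "a1 = Complex (-R) 0" "a2 = Complex R 0" "a3 = Complex R s" "a4 = Complex (-R) s"
  have "(F has_contour_integral 0) (rectpath a1 a3)"
    by (rule Cauchy_theorem_convex_simple[OF holo]) auto
  hence "contour_integral (rectpath a1 a3) F = 0" by (rule contour_integral_unique)
  moreover have "rectpath a1 a3 = linepath a1 a2 +++ linepath a2 a3 +++ linepath a3 a4 +++ linepath a4 a1"
    by (simp add: rectpath_def a1_a2_a3_a4_def Let_def)
  ultimately have 0: "contour_integral (linepath a1 a2) F + contour_integral (linepath a2 a3) F
     + contour_integral (linepath a3 a4) F + contour_integral (linepath a4 a1) F = 0"
    by (simp add: ci valid_path_join add.assoc)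
  have 1: "contour_integral (linepath a1 a2) F = integral {-R..R} (\<lambda>x. F (Complex x 0))"
    unfolding a1_a2_a3_a4_def using R by (intro contour_integral_linepath_horiz) auto
  have 2: "contour_integral (linepath a2 a3) F = \<i> * integral {0..s} (\<lambda>y. F (Complex R y))"
    unfolding a1_a2_a3_a4_def using s by (intro contour_integral_linepath_same_Re) auto
  have 3: "contour_integral (linepath a3 a4) F = - integral {-R..R} (\<lambda>x. F (Complex x s))"
  proof -
    have "contour_integral (linepath a3 a4) F = - contour_integral (linepath a4 a3) F"
      by (metis contour_integral_reversepath reversepath_linepath valid_path_linepath)
    also have "contour_integral (linepath a4 a3) F = integral {-R..R} (\<lambda>x. F (Complex x s))"
      unfolding a1_a2_a3_a4_def using R by (intro contour_integral_linepath_horiz) auto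
    finally show ?thesis .
  qed
  have 4: "contour_integral (linepath a4 a1) F = - (\<i> * integral {0..s} (\<lambda>y. F (Complex (-R) y)))"
  proof -
    have "contour_integral (linepath a4 a1) F = - contour_integral (linepath a1 a4) F"
      by (metis contour_integral_reversepath reversepath_linepath valid_path_linepath)
    also have "contour_integral (linepath a1 a4) F = \<i> * integral {0..s} (\<lambda>y. F (Complex (-R) y))"
      unfolding a1_a2_a3_a4_def using s by (intro contour_integral_linepath_same_Re) auto
    finally show ?thesis .
  qed
  have e: "(\<lambda>x. F (Complex x 0)) = (\<lambda>x. F (of_real x))" by (simp add: complex_of_real_def)
  show ?thesis using 0 unfolding 1 2 3 4 e by (simp add: algebra_simps)
qed

lemma integrable_exp_bound:
  fixes f :: "real \<Rightarrow> complex"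
  assumes "continuous_on UNIV f" "\<And>x. cmod (f x) \<le> C * exp (- \<bar>x\<bar>)"
  shows "integrable lborel f"
proof (rule Bochner_Integration.integrable_bound[where f="\<lambda>x. C * exp (- \<bar>x\<bar>)"])
  show "integrable lborel (\<lambda>x. C * exp (- \<bar>x\<bar>))" using integrable_exp_abs by simp
  show "f \<in> borel_measurable lborel" using assms(1) by (simp add: borel_measurable_continuous_onI)
  show "AE x in lborel. norm (f x) \<le> norm (C * exp (- \<bar>x\<bar>))"
    using assms(2) by (auto intro: order_trans[OF _ abs_ge_self])
qed

lemma lim_integral_sym:
  fixes f :: "real \<Rightarrow> complex"
  assumes f: "integrable lborel f"
  shows "(\<lambda>n. integral {-real n..real n} f) \<longlonglongrightarrow> integral\<^sup>L lborel f"
proof -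
  have eq: "integral {-real n..real n} f = (LINT x|lborel. indicator {-real n..real n} x *\<^sub>R f x)" for n
  proof -
    have "set_integrable lborel {-real n..real n} f"
      unfolding set_integrable_def by (rule integrable_mult_indicator) (use f in auto)
    from set_borel_integral_eq_integral(2)[OF this] show ?thesis
      by (simp add: set_lebesgue_integral_def)
  qed
  have "(\<lambda>n. LINT x|lborel. indicator {-real n..real n} x *\<^sub>R f x) \<longlonglongrightarrow> integral\<^sup>L lborel f"
  proof (rule integral_dominated_convergence[where w="\<lambda>x. norm (f x)"])
    show "f \<in> borel_measurable lborel" using f by auto
    show "(\<lambda>x. indicator {-real n..real n} x *\<^sub>R f x) \<in> borel_measurable lborel" for n
      using f by auto
    show "integrable lborel (\<lambda>x. norm (f x))" using f by auto
    show "AE x in lborel. (\<lambda>n. indicator {-real n..real n} x *\<^sub>R f x) \<longlonglongrightarrow> f x"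
    proof (intro AE_I2 tendsto_eventually)
      fix x :: real
      obtain N :: nat where "\<bar>x\<bar> \<le> real N" using real_arch_simple by blast
      then show "\<forall>\<^sub>F n in sequentially. indicator {-real n..real n} x *\<^sub>R f x = f x"
        unfolding eventually_sequentially by (intro exI[of _ N]) (auto simp: indicator_def)
    qed
    show "AE x in lborel. norm (indicator {-real n..real n} x *\<^sub>R f x) \<le> norm (f x)" for n
      by (auto simp: indicator_def)
  qed
  then show ?thesis unfolding eq .
qed

lemma contour_shift:
  fixes F :: "complex \<Rightarrow> complex"
  assumes holo: "F holomorphic_on UNIV" and s: "s > 0"
    and bnd: "\<And>x y. 0 \<le> y \<Longrightarrow> y \<le> s \<Longrightarrow> cmod (F (Complex x y)) \<le> C * exp (- \<bar>x\<bar>)"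
  shows "(LINT x|lborel. F (of_real x)) = (LINT x|lborel. F (Complex x s))"
proof -
  have cont: "continuous_on UNIV F" using holo holomorphic_on_imp_continuous_on by blast
  have c1: "continuous_on UNIV (\<lambda>x. F (of_real x))"
    by (rule continuous_on_compose2[OF cont]) (auto intro: continuous_intros)
  have c2: "continuous_on UNIV (\<lambda>x. F (Complex x c))" for c
  proof -
    have "(\<lambda>x. Complex x c) = (\<lambda>x. of_real x + \<i> * of_real c)" by (auto simp: Complex_eq)
    moreover have "continuous_on UNIV (\<lambda>x. F (of_real x + \<i> * of_real c))"
      by (rule continuous_on_compose2[OF cont]) (auto intro!: continuous_intros)
    ultimately show ?thesis by metis
  qed
  have c3: "continuous_on UNIV (\<lambda>y. F (Complex c y))" for c
  proof -
    have "(\<lambda>y. Complex c y) = (\<lambda>y. of_real c + \<i> * of_real y)" by (auto simp: Complex_eq)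
    moreover have "continuous_on UNIV (\<lambda>y. F (of_real c + \<i> * of_real y))"
      by (rule continuous_on_compose2[OF cont]) (auto intro!: continuous_intros)
    ultimately show ?thesis by metis
  qed
  have C0: "C \<ge> 0" using bnd[of 0 0] s by (smt (verit) exp_gt_zero norm_ge_zero zero_le_mult_iff)
  have b0: "cmod (F (of_real x)) \<le> C * exp (- \<bar>x\<bar>)" for x
    using bnd[of 0 x] s by (simp add: complex_of_real_def)
  have i1: "integrable lborel (\<lambda>x. F (of_real x))" by (rule integrable_exp_bound[OF c1 b0])
  have i2: "integrable lborel (\<lambda>x. F (Complex x s))" by (rule integrable_exp_bound[OF c2 bnd]) (use s in auto)
  define A where "A = (\<lambda>n::nat. integral {-real n..real n} (\<lambda>x. F (of_real x)))"
  define B where "B = (\<lambda>n::nat. integral {-real n..real n} (\<lambda>x. F (Complex x s)))"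
  have lA: "A \<longlonglongrightarrow> (LINT x|lborel. F (of_real x))" unfolding A_def by (rule lim_integral_sym[OF i1])
  have lB: "B \<longlonglongrightarrow> (LINT x|lborel. F (Complex x s))" unfolding B_def by (rule lim_integral_sym[OF i2])
  have side: "cmod (integral {0..s} (\<lambda>y. F (Complex c y))) \<le> C * exp (- \<bar>c\<bar>) * (s - 0)" for c
    by (rule integral_bound) (use s bnd continuous_on_subset[OF c3] in auto)
  have dbound: "cmod (A n - B n) \<le> 2 * s * C * exp (- real n)" if "n > 0" for n
  proof -
    have "A n - B n = \<i> * integral {0..s} (\<lambda>y. F (Complex (-real n) y)) - \<i> * integral {0..s} (\<lambda>y. F (Complex (real n) y))"
      using rect_identity[OF holo _ s, of "real n"] that unfolding A_def B_def by (simp add: algebra_simps)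
    also have "cmod \<dots> \<le> cmod (\<i> * integral {0..s} (\<lambda>y. F (Complex (-real n) y))) + cmod (\<i> * integral {0..s} (\<lambda>y. F (Complex (real n) y)))"
      by (rule norm_triangle_ineq4)
    also have "\<dots> \<le> C * exp (- real n) * s + C * exp (- real n) * s"
      unfolding norm_mult norm_ii mult_1 by (intro add_mono) (use side[of "-real n"] side[of "real n"] in auto)
    finally show ?thesis by (simp add: algebra_simps)
  qed
  have "(\<lambda>n. A n - B n) \<longlonglongrightarrow> 0"
  proof (rule Lim_null_comparison[where g="\<lambda>n. 2 * s * C * exp (- real n)"])
    show "\<forall>\<^sub>F n in sequentially. norm (A n - B n) \<le> 2 * s * C * exp (- real n)"
      unfolding eventually_sequentially using dbound by (intro exI[of _ 1]) auto
    have "(\<lambda>n. exp (- real n)) \<longlonglongrightarrow> 0"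
      by (rule filterlim_compose[OF exp_at_bot]) (simp add: filterlim_uminus_at_bot filterlim_real_sequentially)
    then show "(\<lambda>n. 2 * s * C * exp (- real n)) \<longlonglongrightarrow> 0"
      by (rule tendsto_mult_right_zero)
  qed
  moreover have "(\<lambda>n. A n - B n) \<longlonglongrightarrow> (LINT x|lborel. F (of_real x)) - (LINT x|lborel. F (Complex x s))"
    by (intro tendsto_diff lA lB)
  ultimately have "(LINT x|lborel. F (of_real x)) - (LINT x|lborel. F (Complex x s)) = 0"
    by (rule LIMSEQ_unique[rotated])
  then show ?thesis by simp
qed

lemma norm_iexp_minus_1: "cmod (exp (\<i> * of_real x) - 1) \<le> \<bar>x\<bar>"
proof -
  have e: "exp (\<i> * of_real x) - 1 = Complex (cos x - 1) (sin x)"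
    by (simp add: cis_conv_exp[symmetric] cis.ctr Complex_eq)
  have c: "cos x = 1 - 2 * (sin (x/2))\<^sup>2"
    using cos_double_sin[of "x/2"] by simp
  have s: "\<bar>sin (x/2)\<bar> \<le> \<bar>x/2\<bar>" by (rule abs_sin_x_le_abs_x)
  have "(cos x - 1)\<^sup>2 + (sin x)\<^sup>2 = 2 - 2 * cos x"
    using sin_cos_squared_add[of x] by (simp add: power2_eq_square algebra_simps)
  also have "\<dots> = 4 * (sin (x/2))\<^sup>2" using c by simp
  also have "\<dots> \<le> 4 * (x/2)\<^sup>2"
  proof -
    have "(sin (x/2))\<^sup>2 \<le> (x/2)\<^sup>2" using s by (metis abs_le_square_iff)
    then show ?thesis by simp
  qed
  also have "\<dots> = x\<^sup>2" by (simp add: power2_eq_square)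
  finally have "(cos x - 1)\<^sup>2 + (sin x)\<^sup>2 \<le> x\<^sup>2" .
  then have "sqrt ((cos x - 1)\<^sup>2 + (sin x)\<^sup>2) \<le> \<bar>x\<bar>"
    using real_sqrt_le_mono by fastforce
  then show ?thesis by (simp add: e cmod_def)
qed

lemma abs_exp_2: "\<bar>x::real\<bar> * exp (- 2 * \<bar>x\<bar>) \<le> exp (- \<bar>x\<bar>)"
proof -
  have "\<bar>x\<bar> \<le> exp \<bar>x\<bar>" using exp_ge_add_one_self[of "\<bar>x\<bar>"] by linarith
  hence "\<bar>x\<bar> * exp (- 2 * \<bar>x\<bar>) \<le> exp \<bar>x\<bar> * exp (- 2 * \<bar>x\<bar>)" by (intro mult_right_mono) auto
  also have "\<dots> = exp (- \<bar>x\<bar>)" by (simp flip: exp_add)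
  finally show ?thesis .
qed

lemma fourier_deriv:
  fixes \<psi> :: "real \<Rightarrow> complex"
  assumes cont: "continuous_on UNIV \<psi>" and bnd: "\<And>x. cmod (\<psi> x) \<le> C * exp (- 2 * \<bar>x\<bar>)"
  shows "((\<lambda>u. LINT x|lborel. \<psi> x * exp (\<i> * of_real (x * u))) has_vector_derivative
          (LINT x|lborel. \<i> * of_real x * \<psi> x * exp (\<i> * of_real (x * u)))) (at u)"
proof -
  define \<Phi> where "\<Phi> = (\<lambda>u. LINT x|lborel. \<psi> x * exp (\<i> * of_real (x * u)))"
  define D where "D = (LINT x|lborel. \<i> * of_real x * \<psi> x * exp (\<i> * of_real (x * u)))"
  have C0: "C \<ge> 0" using bnd[of 0] by (smt (verit) exp_gt_zero norm_ge_zero zero_le_mult_iff)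
  have bnd1: "cmod (\<psi> x) \<le> C * exp (- \<bar>x\<bar>)" for x
    using bnd[of x] C0 by (smt (verit) exp_le_cancel_iff mult_left_mono)
  have bnd2: "\<bar>x\<bar> * cmod (\<psi> x) \<le> C * exp (- \<bar>x\<bar>)" for x
  proof -
    have "\<bar>x\<bar> * cmod (\<psi> x) \<le> \<bar>x\<bar> * (C * exp (- 2 * \<bar>x\<bar>))" by (intro mult_left_mono bnd) auto
    also have "\<dots> = C * (\<bar>x\<bar> * exp (- 2 * \<bar>x\<bar>))" by simp
    also have "\<dots> \<le> C * exp (- \<bar>x\<bar>)" by (intro mult_left_mono abs_exp_2 C0)
    finally show ?thesis .
  qed
  have int\<Phi>: "integrable lborel (\<lambda>x. \<psi> x * exp (\<i> * of_real (x * v)))" for v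
    by (rule integrable_exp_bound[where C=C]) (auto intro!: continuous_intros cont simp: norm_mult bnd1)
  have intD: "integrable lborel (\<lambda>x. \<i> * of_real x * \<psi> x * exp (\<i> * of_real (x * u)))"
    by (rule integrable_exp_bound[where C=C]) (auto intro!: continuous_intros cont simp: norm_mult bnd2)
  define Q where "Q = (\<lambda>h::real. LINT x|lborel. \<psi> x * exp (\<i> * of_real (x * u)) * ((exp (\<i> * of_real (x * h)) - 1) / of_real h))"
  have Qeq: "(\<Phi> (u + h) - \<Phi> u) / of_real h = Q h" for h
  proof -
    have "\<Phi> (u + h) - \<Phi> u = (LINT x|lborel. \<psi> x * exp (\<i> * of_real (x * (u + h))) - \<psi> x * exp (\<i> * of_real (x * u)))"
      unfolding \<Phi>_def by (rule Bochner_Integration.integral_diff[symmetric]) (rule int\<Phi>)+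
    also have "\<dots> = (LINT x|lborel. \<psi> x * exp (\<i> * of_real (x * u)) * (exp (\<i> * of_real (x * h)) - 1))"
      by (intro Bochner_Integration.integral_cong refl) (simp add: algebra_simps flip: exp_add)
    finally show ?thesis unfolding Q_def by (simp add: integral_divide_zero)
  qed
  have lim_pt: "((\<lambda>w. (exp (\<i> * of_real x * w) - 1) / w) \<longlongrightarrow> \<i> * of_real x) (at 0)" for x
  proof -
    have "((\<lambda>w. exp (\<i> * of_real x * w)) has_field_derivative \<i> * of_real x * exp (\<i> * of_real x * 0)) (at 0)"
      by (auto intro!: derivative_eq_intros)
    then show ?thesis by (simp add: DERIV_def)
  qed
  have QD: "(Q \<longlongrightarrow> D) (at 0)"
    unfolding tendsto_at_iff_sequentially
  proof (intro allI impI)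
    fix X :: "nat \<Rightarrow> real" assume X0: "\<forall>i. X i \<in> UNIV - {0}" and X: "X \<longlonglongrightarrow> 0"
    show "(Q \<circ> X) \<longlonglongrightarrow> D"
      unfolding comp_def Q_def D_def
    proof (rule integral_dominated_convergence[where w="\<lambda>x. C * exp (- \<bar>x\<bar>)"])
      show "(\<lambda>x. \<i> * of_real x * \<psi> x * exp (\<i> * of_real (x * u))) \<in> borel_measurable lborel"
        using intD by auto
      show "(\<lambda>x. \<psi> x * exp (\<i> * of_real (x * u)) * ((exp (\<i> * of_real (x * X i)) - 1) / of_real (X i))) \<in> borel_measurable lborel" for i
      proof -
        have "continuous_on UNIV (\<lambda>x. \<psi> x * exp (\<i> * of_real (x * u)) * ((exp (\<i> * of_real (x * X i)) - 1) / of_real (X i)))"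
          using X0 by (auto intro!: continuous_intros cont)
        then show ?thesis by (simp add: borel_measurable_continuous_onI)
      qed
      show "integrable lborel (\<lambda>x. C * exp (- \<bar>x\<bar>))" using integrable_exp_abs by simp
      show "AE x in lborel. (\<lambda>i. \<psi> x * exp (\<i> * of_real (x * u)) * ((exp (\<i> * of_real (x * X i)) - 1) / of_real (X i)))
              \<longlonglongrightarrow> \<i> * of_real x * \<psi> x * exp (\<i> * of_real (x * u))"
      proof (intro AE_I2)
        fix x
        have "(\<lambda>i. of_real (X i) :: complex) \<longlonglongrightarrow> 0" using X by (metis of_real_0 tendsto_of_real)
        moreover have "\<forall>i. (of_real (X i) :: complex) \<in> UNIV - {0}" using X0 by auto
        ultimately have "(\<lambda>i. (exp (\<i> * of_real x * of_real (X i)) - 1) / of_real (X i)) \<longlonglongrightarrow> \<i> * of_real x"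
          using lim_pt[of x, unfolded tendsto_at_iff_sequentially, rule_format, of "\<lambda>i. of_real (X i)"]
          unfolding comp_def by blast
        hence "(\<lambda>i. \<psi> x * exp (\<i> * of_real (x * u)) * ((exp (\<i> * of_real x * of_real (X i)) - 1) / of_real (X i)))
              \<longlonglongrightarrow> \<psi> x * exp (\<i> * of_real (x * u)) * (\<i> * of_real x)"
          by (intro tendsto_intros)
        then show "(\<lambda>i. \<psi> x * exp (\<i> * of_real (x * u)) * ((exp (\<i> * of_real (x * X i)) - 1) / of_real (X i)))
              \<longlonglongrightarrow> \<i> * of_real x * \<psi> x * exp (\<i> * of_real (x * u))"
          by (simp add: algebra_simps)
      qed
      show "AE x in lborel. norm (\<psi> x * exp (\<i> * of_real (x * u)) * ((exp (\<i> * of_real (x * X i)) - 1) / of_real (X i))) \<le> C * exp (- \<bar>x\<bar>)" for i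
      proof (intro AE_I2)
        fix x
        have Xi: "X i \<noteq> 0" using X0 by auto
        have "norm ((exp (\<i> * of_real (x * X i)) - 1) / of_real (X i)) \<le> \<bar>x\<bar>"
          using norm_iexp_minus_1[of "x * X i"] Xi by (simp add: norm_divide abs_mult divide_le_eq)
        hence "norm (\<psi> x * exp (\<i> * of_real (x * u)) * ((exp (\<i> * of_real (x * X i)) - 1) / of_real (X i))) \<le> cmod (\<psi> x) * \<bar>x\<bar>"
        proof -
          have n1: "cmod (exp (\<i> * of_real (x * u))) = 1" by (rule norm_exp_i_times)
          have "norm (\<psi> x * exp (\<i> * of_real (x * u)) * ((exp (\<i> * of_real (x * X i)) - 1) / of_real (X i)))
             = cmod (\<psi> x) * norm ((exp (\<i> * of_real (x * X i)) - 1) / of_real (X i))"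
            by (simp only: norm_mult n1)
          then show ?thesis using \<open>norm ((exp (\<i> * of_real (x * X i)) - 1) / of_real (X i)) \<le> \<bar>x\<bar>\<close>
            by (simp add: mult_left_mono)
        qed
        also have "\<dots> \<le> C * exp (- \<bar>x\<bar>)" using bnd2[of x] by (simp add: mult.commute)
        finally show "norm (\<psi> x * exp (\<i> * of_real (x * u)) * ((exp (\<i> * of_real (x * X i)) - 1) / of_real (X i))) \<le> C * exp (- \<bar>x\<bar>)" .
      qed
    qed
  qed
  have "(\<Phi> has_vector_derivative D) (at u)"
    unfolding has_vector_derivative_def has_derivative_at
  proof (intro conjI)
    show "bounded_linear (\<lambda>h. h *\<^sub>R D)" by (rule bounded_linear_scaleR_left)
    have ev: "\<forall>\<^sub>F h in at 0. norm (Q h - D) = norm (\<Phi> (u + h) - \<Phi> u - h *\<^sub>R D) / norm h"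
    proof (rule eventually_at_filter[THEN iffD2, OF always_eventually], intro allI impI)
      fix h :: real assume "h \<noteq> 0"
      hence "Q h - D = (\<Phi> (u + h) - \<Phi> u - h *\<^sub>R D) / of_real h"
        by (simp add: Qeq[symmetric] diff_divide_distrib scaleR_conv_of_real)
      thus "norm (Q h - D) = norm (\<Phi> (u + h) - \<Phi> u - h *\<^sub>R D) / norm h"
        by (simp add: norm_divide)
    qed
    have "((\<lambda>h. norm (Q h - D)) \<longlongrightarrow> 0) (at 0)"
      using QD by (simp add: tendsto_norm_zero_iff LIM_zero_iff)
    then show "((\<lambda>h. norm (\<Phi> (u + h) - \<Phi> u - h *\<^sub>R D) / norm h) \<longlongrightarrow> 0) (at 0)"
      using ev by (rule Lim_transform_eventually)
  qed
  then show ?thesis unfolding \<Phi>_def D_def .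
qed

definition Hc :: "real \<Rightarrow> real \<Rightarrow> real \<Rightarrow> complex \<Rightarrow> complex" where
  "Hc a b t w = of_real (t / sqrt pi) *
     integral {a..b} (\<lambda>m. exp (- (of_real (t\<^sup>2) * (1/4 + w\<^sup>2 - of_real m)\<^sup>2)))"

lemma Hc_real:
  assumes "a \<le> b"
  shows "Hc a b t (of_real x) = of_real (h_t a b t x)"
proof -
  define g where "g = (\<lambda>m::real. exp (- (t\<^sup>2 * (1/4 + x\<^sup>2 - m)\<^sup>2)))"
  have cg: "continuous_on {a..b} g" unfolding g_def by (auto intro!: continuous_intros)
  have "set_integrable lborel {a..b} g"
    unfolding set_integrable_def by (rule borel_integrable_compact[OF compact_Icc cg])
  hence "(LBINT m:{a..b}. g m) = integral {a..b} g" by (rule set_borel_integral_eq_integral(2))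
  hence LB: "(LBINT m=a..b. g m) = integral {a..b} g" using assms by (simp add: interval_integral_Icc)
  have "(g has_integral integral {a..b} g) {a..b}"
    using integrable_continuous_interval[OF cg] by (simp add: has_integral_integral)
  from has_integral_of_real[OF this]
  have hi: "((\<lambda>m. of_real (g m) :: complex) has_integral of_real (integral {a..b} g)) {a..b}" .
  have feq: "(\<lambda>m. of_real (g m) :: complex) = (\<lambda>m. exp (- (of_real (t\<^sup>2) * (1/4 + (of_real x :: complex)\<^sup>2 - of_real m)\<^sup>2)))"
    unfolding g_def by (auto simp flip: exp_of_real)
  have "integral {a..b} (\<lambda>m. exp (- (of_real (t\<^sup>2) * (1/4 + (of_real x :: complex)\<^sup>2 - of_real m)\<^sup>2))) = of_real (integral {a..b} g)"
    by (intro integral_unique) (simp only: feq[symmetric] hi)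
  then show ?thesis
    unfolding Hc_def h_t_def f_t_def using LB unfolding g_def by simp
qed

lemma Hc_holo: "Hc a b t holomorphic_on UNIV"
proof -
  define f where "f = (\<lambda>(w::complex) m. exp (- (of_real (t\<^sup>2) * (1/4 + w\<^sup>2 - of_real (m::real))\<^sup>2)))"
  define fx where "fx = (\<lambda>(w::complex) m. exp (- (of_real (t\<^sup>2) * (1/4 + w\<^sup>2 - of_real (m::real))\<^sup>2)) *
        (- (of_real (t\<^sup>2) * (2 * (1/4 + w\<^sup>2 - of_real m) * (2 * w)))))"
  have "(\<lambda>w. integral (cbox a b) (f w)) holomorphic_on UNIV"
  proof (rule leibniz_rule_holomorphic[where fx=fx])
    fix w :: complex and m :: real
    show "((\<lambda>w. f w m) has_field_derivative fx w m) (at w within UNIV)"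
      unfolding f_def fx_def by (auto intro!: derivative_eq_intros simp: power2_eq_square)
  next
    fix w :: complex
    show "f w integrable_on cbox a b"
      unfolding f_def by (intro integrable_continuous) (auto intro!: continuous_intros)
  next
    show "continuous_on (UNIV \<times> cbox a b) (\<lambda>(w, m). fx w m)"
      unfolding fx_def by (auto intro!: continuous_intros simp: case_prod_unfold)
  qed auto
  then show ?thesis unfolding Hc_def f_def by (auto intro!: holomorphic_intros)
qed

lemma re_sq_bound:
  fixes x y m :: real
  assumes "y\<^sup>2 \<le> 9" "0 \<le> m" "m \<le> 1"
  shows "x^4 - 111/2 * x\<^sup>2 \<le> (1/4 + x\<^sup>2 - y\<^sup>2 - m)\<^sup>2 - (2 * x * y)\<^sup>2"
proof -
  have "(1/4 + x\<^sup>2 - y\<^sup>2 - m)\<^sup>2 - (2 * x * y)\<^sup>2 - (x^4 - 111/2 * x\<^sup>2)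
      = (1/4 - y\<^sup>2 - m)\<^sup>2 + x\<^sup>2 * (56 - 6 * y\<^sup>2 - 2 * m)"
    by (simp add: power2_eq_square power4_eq_xxxx algebra_simps)
  moreover have "0 \<le> x\<^sup>2 * (56 - 6 * y\<^sup>2 - 2 * m)" using assms by (intro mult_nonneg_nonneg) auto
  ultimately show ?thesis by (smt (verit) zero_le_power2)
qed

lemma Hc_bound:
  assumes ab: "0 \<le> a" "a \<le> b" "b \<le> 1" and t: "0 \<le> t" and y: "\<bar>Im w\<bar> \<le> 3"
  shows "cmod (Hc a b t w) \<le> t * exp (- (t\<^sup>2 * ((Re w)^4 - 111/2 * (Re w)\<^sup>2)))"
proof -
  define x where "x = Re w"
  define B where "B = exp (- (t\<^sup>2 * (x^4 - 111/2 * x\<^sup>2)))"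
  have y2: "(Im w)\<^sup>2 \<le> 9" using y abs_le_square_iff[of "Im w" 3] by simp
  have pt: "cmod (exp (- (of_real (t\<^sup>2) * (1/4 + w\<^sup>2 - of_real m)\<^sup>2))) \<le> B" if m: "m \<in> {a..b}" for m
  proof -
    have re: "Re ((1/4 + w\<^sup>2 - of_real m)\<^sup>2) = (1/4 + x\<^sup>2 - (Im w)\<^sup>2 - m)\<^sup>2 - (2 * x * Im w)\<^sup>2"
      unfolding x_def by (simp add: power2_eq_square field_simps)
    have "x^4 - 111/2 * x\<^sup>2 \<le> Re ((1/4 + w\<^sup>2 - of_real m)\<^sup>2)"
      unfolding re by (rule re_sq_bound) (use y2 m ab in auto)
    hence "- (t\<^sup>2 * Re ((1/4 + w\<^sup>2 - of_real m)\<^sup>2)) \<le> - (t\<^sup>2 * (x^4 - 111/2 * x\<^sup>2))"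
      by (simp add: mult_left_mono)
    then show ?thesis unfolding B_def by simp
  qed
  have "cmod (integral {a..b} (\<lambda>m. exp (- (of_real (t\<^sup>2) * (1/4 + w\<^sup>2 - of_real m)\<^sup>2)))) \<le> B * (b - a)"
    by (rule integral_bound) (use ab pt in \<open>auto intro!: continuous_intros\<close>)
  also have "\<dots> \<le> B" using ab unfolding B_def by (simp add: mult_left_le)
  finally have I: "cmod (integral {a..b} (\<lambda>m. exp (- (of_real (t\<^sup>2) * (1/4 + w\<^sup>2 - of_real m)\<^sup>2)))) \<le> B" .
  have sp: "1 \<le> sqrt pi" using pi_gt3 by simp
  have "cmod (Hc a b t w) = t / sqrt pi * cmod (integral {a..b} (\<lambda>m. exp (- (of_real (t\<^sup>2) * (1/4 + w\<^sup>2 - of_real m)\<^sup>2))))"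
    unfolding Hc_def norm_mult norm_of_real using t by simp
  also have "\<dots> \<le> t * B"
  proof -
    have "t / sqrt pi \<le> t / 1" by (rule divide_left_mono) (use sp t in auto)
    then show ?thesis by (intro mult_mono I) (use t in \<open>auto simp: B_def\<close>)
  qed
  finally show ?thesis unfolding B_def x_def .
qed

definition Lam :: "real \<Rightarrow> real" where
  "Lam t = t * exp ((111/2)\<^sup>2 * t\<^sup>2 / 2 + 1 / (2 * t\<^sup>2) + 1)"

lemma quartic_bound:
  fixes x t :: real
  assumes t: "t > 0"
  shows "2 * \<bar>x\<bar> - (111/2)\<^sup>2 * t\<^sup>2 / 2 - 1 / (2 * t\<^sup>2) - 1 \<le> t\<^sup>2 * (x^4 - 111/2 * x\<^sup>2)"
proof -
  define \<alpha> :: real where "\<alpha> = 111/2"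
  have i: "\<alpha> * t\<^sup>2 * x\<^sup>2 \<le> t\<^sup>2 * x^4 / 2 + \<alpha>\<^sup>2 * t\<^sup>2 / 2"
  proof -
    have "0 \<le> t\<^sup>2 * (x\<^sup>2 - \<alpha>)\<^sup>2 / 2" by simp
    also have "t\<^sup>2 * (x\<^sup>2 - \<alpha>)\<^sup>2 / 2 = t\<^sup>2 * x^4 / 2 + \<alpha>\<^sup>2 * t\<^sup>2 / 2 - \<alpha> * t\<^sup>2 * x\<^sup>2"
      by (simp add: power2_eq_square power4_eq_xxxx field_simps)
    finally show ?thesis by simp
  qed
  have ii: "x\<^sup>2 \<le> t\<^sup>2 * x^4 / 2 + 1 / (2 * t\<^sup>2)"
  proof -
    have "0 \<le> (t * x\<^sup>2 - 1 / t)\<^sup>2 / 2" by simp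
    also have "(t * x\<^sup>2 - 1 / t)\<^sup>2 / 2 = t\<^sup>2 * x^4 / 2 + 1 / (2 * t\<^sup>2) - x\<^sup>2"
      using t by (simp add: power2_eq_square power4_eq_xxxx field_simps)
    finally show ?thesis by simp
  qed
  have iii: "2 * \<bar>x\<bar> \<le> x\<^sup>2 + 1"
  proof -
    have "0 \<le> (\<bar>x\<bar> - 1)\<^sup>2" by simp
    then show ?thesis by (simp add: power2_eq_square algebra_simps)
  qed
  have "t\<^sup>2 * (x^4 - 111/2 * x\<^sup>2) = t\<^sup>2 * x^4 - \<alpha> * t\<^sup>2 * x\<^sup>2" unfolding \<alpha>_def by (simp add: algebra_simps)
  with i ii iii show ?thesis unfolding \<alpha>_def by linarith
qed

lemma Hc_exp_bound:
  assumes ab: "0 \<le> a" "a \<le> b" "b \<le> 1" and t: "0 < t" and y: "\<bar>Im w\<bar> \<le> 3"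
  shows "cmod (Hc a b t w) \<le> Lam t * exp (- 2 * \<bar>Re w\<bar>)"
proof -
  have "cmod (Hc a b t w) \<le> t * exp (- (t\<^sup>2 * ((Re w)^4 - 111/2 * (Re w)\<^sup>2)))"
    by (rule Hc_bound) (use ab t y in auto)
  also have "\<dots> \<le> t * exp ((111/2)\<^sup>2 * t\<^sup>2 / 2 + 1 / (2 * t\<^sup>2) + 1 - 2 * \<bar>Re w\<bar>)"
    using quartic_bound[OF t, of "Re w"] t by (intro mult_left_mono) auto
  also have "\<dots> = Lam t * exp (- 2 * \<bar>Re w\<bar>)"
    unfolding Lam_def by (simp add: mult.assoc exp_add[symmetric])
  finally show ?thesis .
qed

lemma Lam_pos: "t > 0 \<Longrightarrow> Lam t > 0" unfolding Lam_def by simp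

lemma norm_integral_exp_bound:
  fixes f :: "real \<Rightarrow> complex"
  assumes "continuous_on UNIV f" "\<And>x. cmod (f x) \<le> C * exp (- \<bar>x\<bar>)"
  shows "cmod (LINT x|lborel. f x) \<le> 2 * C"
proof -
  have "cmod (LINT x|lborel. f x) \<le> (LINT x|lborel. cmod (f x))" by (rule integral_norm_bound)
  also have "\<dots> \<le> (LINT x|lborel. C * exp (- \<bar>x\<bar>))"
    by (intro integral_mono integrable_norm integrable_exp_bound[OF assms]) (use assms(2) integrable_exp_abs in auto)
  also have "\<dots> = 2 * C" using integral_exp_abs by simp
  finally show ?thesis .
qed

lemma g_t_repr:
  assumes ab: "0 \<le> a" "a \<le> b" "b \<le> 1" and t: "0 < t"
  shows "g_t a b t u = of_real (1 / (2 * pi)) * (exp (- 3 * of_real u) *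
            (LINT x|lborel. Hc a b t (Complex x 3) * exp (\<i> * of_real (x * u))))"
proof -
  define F where "F = (\<lambda>w. Hc a b t w * exp (\<i> * w * of_real u))"
  have holo: "F holomorphic_on UNIV" unfolding F_def by (intro holomorphic_intros Hc_holo)
  have bnd: "cmod (F (Complex x y)) \<le> (Lam t * exp (3 * \<bar>u\<bar>)) * exp (- \<bar>x\<bar>)" if "0 \<le> y" "y \<le> 3" for x y
  proof -
    have "cmod (Hc a b t (Complex x y)) \<le> Lam t * exp (- 2 * \<bar>x\<bar>)"
      using Hc_exp_bound[OF ab t, of "Complex x y"] that by simp
    also have "\<dots> \<le> Lam t * exp (- \<bar>x\<bar>)" using Lam_pos[OF t] by (intro mult_left_mono) auto
    finally have h: "cmod (Hc a b t (Complex x y)) \<le> Lam t * exp (- \<bar>x\<bar>)" .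
    have "cmod (exp (\<i> * Complex x y * of_real u)) = exp (- (y * u))" unfolding norm_exp_eq_Re by simp
    also have "\<dots> \<le> exp (3 * \<bar>u\<bar>)"
    proof -
      have "- (y * u) \<le> 3 * \<bar>u\<bar>"
      proof -
        have "- (y * u) \<le> \<bar>y * u\<bar>" by (rule abs_ge_minus_self)
        also have "\<bar>y * u\<bar> = y * \<bar>u\<bar>" using that by (simp add: abs_mult)
        also have "\<dots> \<le> 3 * \<bar>u\<bar>" using that by (intro mult_right_mono) auto
        finally show ?thesis .
      qed
      then show ?thesis by simp
    qed
    finally have e: "cmod (exp (\<i> * Complex x y * of_real u)) \<le> exp (3 * \<bar>u\<bar>)" .
    have "cmod (F (Complex x y)) = cmod (Hc a b t (Complex x y)) * cmod (exp (\<i> * Complex x y * of_real u))"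
      unfolding F_def by (simp add: norm_mult)
    also have "\<dots> \<le> (Lam t * exp (- \<bar>x\<bar>)) * exp (3 * \<bar>u\<bar>)" using Lam_pos[OF t] by (intro mult_mono h e) auto
    finally show ?thesis by (simp add: algebra_simps)
  qed
  have cs: "(LINT x|lborel. F (of_real x)) = (LINT x|lborel. F (Complex x 3))"
    by (rule contour_shift[OF holo _ bnd]) auto
  have l: "F (of_real x) = of_real (h_t a b t x) * exp (\<i> * of_real (x * u))" for x
    unfolding F_def using Hc_real[OF ab(2)] by (simp add: mult.assoc)
  have r: "F (Complex x 3) = exp (- 3 * of_real u) * (Hc a b t (Complex x 3) * exp (\<i> * of_real (x * u)))" for x
  proof -
    have "\<i> * Complex x 3 * of_real u = - 3 * of_real u + \<i> * of_real (x * u)"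
      by (simp add: complex_eq_iff)
    then have "exp (\<i> * Complex x 3 * of_real u) = exp (- 3 * of_real u) * exp (\<i> * of_real (x * u))"
      by (simp add: exp_add[symmetric])
    then show ?thesis unfolding F_def by (simp add: mult.left_commute)
  qed
  show ?thesis unfolding g_t_def using cs unfolding l r by simp
qed

lemma g_t_deriv_bound:
  assumes ab: "0 \<le> a" "a \<le> b" "b \<le> 1" and t: "0 < t"
  shows "cmod (vector_derivative (g_t a b t) (at u)) \<le> 2 * Lam t * exp (- 3 * u)"
proof -
  define \<psi> where "\<psi> = (\<lambda>x. Hc a b t (Complex x 3))"
  define \<Phi> where "\<Phi> = (\<lambda>u. LINT x|lborel. \<psi> x * exp (\<i> * of_real (x * u)))"
  define \<Phi>' where "\<Phi>' = (\<lambda>u. LINT x|lborel. \<i> * of_real x * \<psi> x * exp (\<i> * of_real (x * u)))"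
  define c where "c = (of_real (1 / (2 * pi)) :: complex)"
  have L0: "Lam t > 0" by (rule Lam_pos[OF t])
  have cont: "continuous_on UNIV \<psi>"
  proof -
    have hc: "continuous_on UNIV (Hc a b t)" using Hc_holo holomorphic_on_imp_continuous_on by blast
    have e: "\<And>x. Complex x 3 = of_real x + \<i> * 3" by (auto simp: complex_eq_iff)
    have "continuous_on UNIV (\<lambda>x. Hc a b t (of_real x + \<i> * 3))"
      by (rule continuous_on_compose2[OF hc]) (auto intro!: continuous_intros)
    then show ?thesis unfolding \<psi>_def e .
  qed
  have bnd: "cmod (\<psi> x) \<le> Lam t * exp (- 2 * \<bar>x\<bar>)" for x
    unfolding \<psi>_def using Hc_exp_bound[OF ab t, of "Complex x 3"] by simp
  have der: "(\<Phi> has_vector_derivative \<Phi>' u) (at u)" for u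
    unfolding \<Phi>_def \<Phi>'_def by (rule fourier_deriv[OF cont bnd])
  have bnd1: "cmod (\<Phi> u) \<le> 2 * Lam t" for u
    unfolding \<Phi>_def
  proof (rule norm_integral_exp_bound)
    show "continuous_on UNIV (\<lambda>x. \<psi> x * exp (\<i> * complex_of_real (x * u)))" by (auto intro!: continuous_intros cont)
    fix x
    have "cmod (\<psi> x * exp (\<i> * complex_of_real (x * u))) = cmod (\<psi> x)" by (simp add: norm_mult)
    also have "\<dots> \<le> Lam t * exp (- 2 * \<bar>x\<bar>)" by (rule bnd)
    also have "\<dots> \<le> Lam t * exp (- \<bar>x\<bar>)" using L0 by (intro mult_left_mono) auto
    finally show "cmod (\<psi> x * exp (\<i> * complex_of_real (x * u))) \<le> Lam t * exp (- \<bar>x\<bar>)" .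
  qed
  have bnd2: "cmod (\<Phi>' u) \<le> 2 * Lam t" for u
    unfolding \<Phi>'_def
  proof (rule norm_integral_exp_bound)
    show "continuous_on UNIV (\<lambda>x. \<i> * of_real x * \<psi> x * exp (\<i> * complex_of_real (x * u)))" by (auto intro!: continuous_intros cont)
    fix x
    have "cmod (\<i> * of_real x * \<psi> x * exp (\<i> * complex_of_real (x * u))) = \<bar>x\<bar> * cmod (\<psi> x)" by (simp add: norm_mult)
    also have "\<dots> \<le> \<bar>x\<bar> * (Lam t * exp (- 2 * \<bar>x\<bar>))" by (intro mult_left_mono bnd) auto
    also have "\<dots> = Lam t * (\<bar>x\<bar> * exp (- 2 * \<bar>x\<bar>))" by simp
    also have "\<dots> \<le> Lam t * exp (- \<bar>x\<bar>)" using L0 by (intro mult_left_mono abs_exp_2) auto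
    finally show "cmod (\<i> * of_real x * \<psi> x * exp (\<i> * complex_of_real (x * u))) \<le> Lam t * exp (- \<bar>x\<bar>)" .
  qed
  have geq: "g_t a b t = (\<lambda>v. exp (- 3 * v) *\<^sub>R (c * \<Phi> v))"
  proof
    fix v
    have "exp (- 3 * complex_of_real v) = of_real (exp (- 3 * v))" by (simp flip: exp_of_real)
    then show "g_t a b t v = exp (- 3 * v) *\<^sub>R (c * \<Phi> v)"
      unfolding g_t_repr[OF ab t] \<Phi>_def \<psi>_def c_def by (simp add: scaleR_conv_of_real mult_ac)
  qed
  have "((\<lambda>v. exp (- 3 * v) *\<^sub>R (c * \<Phi> v)) has_vector_derivative
          (exp (- 3 * u) *\<^sub>R (c * \<Phi>' u) + (- 3 * exp (- 3 * u)) *\<^sub>R (c * \<Phi> u))) (at u)"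
    by (rule has_vector_derivative_scaleR)
       (auto intro!: derivative_eq_intros has_vector_derivative_mult_right der)
  hence vd: "vector_derivative (g_t a b t) (at u) = exp (- 3 * u) *\<^sub>R (c * \<Phi>' u) + (- 3 * exp (- 3 * u)) *\<^sub>R (c * \<Phi> u)"
    unfolding geq by (rule vector_derivative_at)
  have nc: "cmod c = 1 / (2 * pi)" unfolding c_def norm_of_real using pi_gt_zero by simp
  have "cmod (vector_derivative (g_t a b t) (at u)) \<le> exp (- 3 * u) * (cmod c * cmod (\<Phi>' u)) + 3 * exp (- 3 * u) * (cmod c * cmod (\<Phi> u))"
    unfolding vd by (rule order_trans[OF norm_triangle_ineq]) (simp add: norm_mult)
  also have "\<dots> \<le> exp (- 3 * u) * (cmod c * (2 * Lam t)) + 3 * exp (- 3 * u) * (cmod c * (2 * Lam t))"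
    by (intro add_mono mult_left_mono bnd1 bnd2) auto
  also have "\<dots> = exp (- 3 * u) * Lam t * (8 / (2 * pi))" unfolding nc by (simp add: field_simps)
  also have "\<dots> \<le> exp (- 3 * u) * Lam t * 2"
  proof -
    have "8 / (2 * pi) \<le> 2" using pi_gt3 by (simp add: divide_le_eq)
    then show ?thesis using L0 by (intro mult_left_mono) auto
  qed
  finally show ?thesis by (simp add: mult_ac)
qed

lemma sinh_ge_self: "0 \<le> x \<Longrightarrow> x \<le> sinh (x::real)"
proof (cases "x = 0")
  case False
  assume x: "0 \<le> x"
  with False have "0 < x" by simp
  have d: "(sinh has_real_derivative cosh y) (at y)" for y :: real
    using has_field_derivative_sinh[of "\<lambda>x. x" 1 y] by simp
  from MVT2[OF \<open>0 < x\<close> d] obtain z where "sinh x - sinh 0 = (x - 0) * cosh z"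
    by blast
  moreover have "x * 1 \<le> x * cosh z" using x cosh_real_ge_1[of z] by (intro mult_left_mono) auto
  ultimately show ?thesis by simp
qed simp

lemma cosh_diff_ge:
  fixes \<rho> u :: real
  assumes "0 \<le> \<rho>" "\<rho> \<le> u"
  shows "\<rho> * (u - \<rho>) \<le> cosh u - cosh \<rho>"
proof (cases "\<rho> = u")
  case False
  with assms have "\<rho> < u" by simp
  have d: "(cosh has_real_derivative sinh y) (at y)" for y :: real
    using has_field_derivative_cosh[of "\<lambda>x. x" 1 y] by simp
  from MVT2[OF \<open>\<rho> < u\<close> d] obtain z where z: "\<rho> < z" "cosh u - cosh \<rho> = (u - \<rho>) * sinh z"
    by blast
  have "\<rho> \<le> sinh \<rho>" by (rule sinh_ge_self[OF assms(1)])
  also have "\<dots> \<le> sinh z" using z by simp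
  finally have "(u - \<rho>) * \<rho> \<le> (u - \<rho>) * sinh z" using assms by (intro mult_left_mono) auto
  with z show ?thesis by (simp add: mult.commute)
qed simp

lemma integral_le_from_nn:
  fixes q :: "real \<Rightarrow> real"
  assumes q: "\<And>x. 0 \<le> q x" and nn: "(\<integral>\<^sup>+x. ennreal (q x) \<partial>lborel) \<le> ennreal B" and B: "0 \<le> B"
  shows "(LINT x|lborel. q x) \<le> B"
proof (cases "integrable lborel q")
  case True
  then have "(LINT x|lborel. q x) = enn2real (\<integral>\<^sup>+x. ennreal (q x) \<partial>lborel)"
    using q by (intro integral_eq_nn_integral) auto
  also have "\<dots> \<le> enn2real (ennreal B)" using nn by (intro enn2real_mono) auto
  finally show ?thesis using B by simp
next
  case False
  then show ?thesis using B by (simp add: not_integrable_integral_eq)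
qed

definition Pfun :: "real \<Rightarrow> real" where
  "Pfun v = indicator {0..1} v * v powr (-1/2) + indicator {0..} v * exp (- v)"

lemma Pfun_nonneg: "0 \<le> Pfun v" unfolding Pfun_def by (auto simp: indicator_def)

lemma Pfun_meas[measurable]: "Pfun \<in> borel_measurable borel"
  unfolding Pfun_def by measurable

lemma nn_Pfun: "(\<integral>\<^sup>+v. ennreal (Pfun v) \<partial>lborel) = 3"
proof -
  have h1: "((\<lambda>x::real. x powr (-1/2)) has_integral 2) {0..1}"
    using has_integral_powr_from_0[of "-1/2" 1] by simp
  have n1: "(\<integral>\<^sup>+v. ennreal (indicator {0..1} v * v powr (-1/2)) \<partial>lborel) = 2"
    using nn_integral_has_integral_lebesgue[OF _ h1] by simp
  have "(\<integral>\<^sup>+v. ennreal (Pfun v) \<partial>lborel) =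
        (\<integral>\<^sup>+v. ennreal (indicator {0..1} v * v powr (-1/2)) + ennreal (indicator {0..} v * exp (- v)) \<partial>lborel)"
    unfolding Pfun_def by (intro nn_integral_cong) (auto simp: indicator_def ennreal_plus)
  also have "\<dots> = (\<integral>\<^sup>+v. ennreal (indicator {0..1} v * v powr (-1/2)) \<partial>lborel) + (\<integral>\<^sup>+v. ennreal (indicator {0..} v * exp (- v)) \<partial>lborel)"
    by (intro nn_integral_add) auto
  also have "\<dots> = 3" unfolding n1 nn_exp_pos by simp
  finally show ?thesis .
qed

lemma K_bound:
  assumes ab: "0 \<le> a" "a \<le> b" "b \<le> 1" and t: "0 < t" and \<rho>: "0 < \<rho>"
  shows "cmod (K_t a b t \<rho>) \<le> 2 * Lam t * exp (- 3 * \<rho>) / sqrt \<rho>"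
proof -
  define g' where "g' = (\<lambda>u. vector_derivative (g_t a b t) (at u))"
  define k where "k = (\<lambda>u. indicator {\<rho><..} u *\<^sub>R (g' u / complex_of_real (sqrt (cosh u - cosh \<rho>))))"
  define M where "M = 2 * Lam t * exp (- 3 * \<rho>) / sqrt \<rho>"
  have L0: "Lam t > 0" by (rule Lam_pos[OF t])
  have M0: "0 \<le> M" unfolding M_def using L0 \<rho> by simp
  have pt: "norm (k u) \<le> M * Pfun (u - \<rho>)" for u
  proof (cases "\<rho> < u")
    case False then show ?thesis unfolding k_def using M0 Pfun_nonneg by simp
  next
    case True
    define v where "v = u - \<rho>"
    have v: "0 < v" using True unfolding v_def by simp
    have cg: "\<rho> * v \<le> cosh u - cosh \<rho>" unfolding v_def by (rule cosh_diff_ge) (use True \<rho> in auto)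
    have pv: "0 < \<rho> * v" using \<rho> v by simp
    have sq: "sqrt \<rho> * sqrt v \<le> sqrt (cosh u - cosh \<rho>)"
      using cg by (simp add: real_sqrt_mult[symmetric])
    have sqp: "0 < sqrt \<rho> * sqrt v" using \<rho> v by simp
    have "norm (k u) = cmod (g' u) / sqrt (cosh u - cosh \<rho>)"
      unfolding k_def using True pv cg by (simp add: norm_divide)
    also have "\<dots> \<le> (2 * Lam t * exp (- 3 * u)) / (sqrt \<rho> * sqrt v)"
      using g_t_deriv_bound[OF ab t, of u] sq sqp L0 unfolding g'_def
      by (intro frac_le) auto
    also have "\<dots> = M * (exp (- 3 * v) / sqrt v)"
    proof -
      have "exp (- 3 * u) = exp (- 3 * \<rho>) * exp (- 3 * v)" unfolding v_def by (simp add: exp_add[symmetric] algebra_simps)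
      then show ?thesis unfolding M_def by (simp add: field_simps)
    qed
    also have "exp (- 3 * v) / sqrt v \<le> Pfun v"
    proof (cases "v \<le> 1")
      case True
      have "exp (- 3 * v) / sqrt v \<le> 1 / sqrt v" using v by (intro divide_right_mono) auto
      also have "1 / sqrt v = v powr (-1/2)" using v by (simp add: powr_minus_divide powr_half_sqrt)
      finally have "exp (- 3 * v) / sqrt v \<le> v powr (-1/2)" .
      moreover have "0 \<le> exp (- v)" by simp
      ultimately show ?thesis unfolding Pfun_def using True v by (simp add: indicator_def, smt (verit) exp_gt_zero)
    next
      case False
      have "sqrt v \<ge> 1" using False by simp
      hence "exp (- 3 * v) / sqrt v \<le> exp (- 3 * v)" by (simp add: divide_le_eq mult_le_cancel_left1)
      also have "\<dots> \<le> exp (- v)" using v by simp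
      finally show ?thesis unfolding Pfun_def using False v by (simp add: indicator_def)
    qed
    finally show ?thesis unfolding v_def using M0 by (simp add: mult_left_mono)
  qed
  have nn: "(\<integral>\<^sup>+u. ennreal (norm (k u)) \<partial>lborel) \<le> ennreal (3 * M)"
  proof -
    have "(\<integral>\<^sup>+u. ennreal (norm (k u)) \<partial>lborel) \<le> (\<integral>\<^sup>+u. ennreal M * ennreal (Pfun (u - \<rho>)) \<partial>lborel)"
      using pt M0 Pfun_nonneg by (intro nn_integral_mono) (simp add: ennreal_mult[symmetric])
    also have "\<dots> = ennreal M * (\<integral>\<^sup>+u. ennreal (Pfun (u - \<rho>)) \<partial>lborel)"
      by (rule nn_integral_cmult) measurable
    also have "(\<integral>\<^sup>+u. ennreal (Pfun (u - \<rho>)) \<partial>lborel) = (\<integral>\<^sup>+v. ennreal (Pfun v) \<partial>lborel)"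
      using nn_integral_real_affine[of "\<lambda>v. ennreal (Pfun v)" 1 "-\<rho>"] by simp
    also have "\<dots> = 3" by (rule nn_Pfun)
    also have "ennreal M * 3 = ennreal (3 * M)"
      using M0 ennreal_mult[of M 3] by (simp add: mult.commute)
    finally show ?thesis .
  qed
  have "cmod (LINT u:{\<rho><..}|lborel. g' u / complex_of_real (sqrt (cosh u - cosh \<rho>))) \<le> (LINT u|lborel. norm (k u))"
    unfolding set_lebesgue_integral_def k_def by (rule integral_norm_bound)
  also have "\<dots> \<le> 3 * M" by (rule integral_le_from_nn[OF _ nn]) (use M0 in auto)
  finally have I: "cmod (LINT u:{\<rho><..}|lborel. g' u / complex_of_real (sqrt (cosh u - cosh \<rho>))) \<le> 3 * M" .
  have c: "3 / (sqrt 2 * pi) \<le> 1"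
  proof -
    have "1 \<le> sqrt 2" by simp
    hence "3 \<le> sqrt 2 * pi" using pi_gt3 by (smt (verit) mult_le_cancel_right1)
    thus ?thesis by simp
  qed
  have "cmod (K_t a b t \<rho>) = 1 / (sqrt 2 * pi) * cmod (LINT u:{\<rho><..}|lborel. g' u / complex_of_real (sqrt (cosh u - cosh \<rho>)))"
    unfolding K_t_def g'_def norm_mult norm_minus_cancel norm_of_real by simp
  also have "\<dots> \<le> 1 / (sqrt 2 * pi) * (3 * M)" by (intro mult_left_mono I) auto
  also have "\<dots> = (3 / (sqrt 2 * pi)) * M" by simp
  also have "\<dots> \<le> 1 * M" by (intro mult_right_mono c M0)
  finally show ?thesis unfolding M_def by simp
qed

definition sig :: "complex \<Rightarrow> complex \<Rightarrow> real" where
  "sig z w = (cmod (z - w))\<^sup>2 / (2 * Im z * Im w)"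

lemma hdist_sig: "hdist z w = arcosh (1 + sig z w)"
  unfolding hdist_def sig_def ..

lemma sig_nonneg: "Im z > 0 \<Longrightarrow> Im w > 0 \<Longrightarrow> 0 \<le> sig z w"
  unfolding sig_def by simp

lemma hdist_nonneg: "Im z > 0 \<Longrightarrow> Im w > 0 \<Longrightarrow> 0 \<le> hdist z w"
  unfolding hdist_sig using sig_nonneg[of z w] by (simp add: arcosh_real_def)

lemma cosh_hdist: "Im z > 0 \<Longrightarrow> Im w > 0 \<Longrightarrow> cosh (hdist z w) = 1 + sig z w"
  unfolding hdist_sig using sig_nonneg[of z w] by simp

lemma cosh_two_ge: "0 \<le> r \<Longrightarrow> 1 + 2 * r\<^sup>2 \<le> cosh (2 * (r::real))"
proof -
  assume r: "0 \<le> r"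
  have "r \<le> sinh r" by (rule sinh_ge_self[OF r])
  hence "r\<^sup>2 \<le> (sinh r)\<^sup>2" using r by (simp add: power_mono)
  moreover have "cosh (2 * r) = 1 + 2 * (sinh r)\<^sup>2" using cosh_double[of r] cosh_square_eq[of r] by simp
  ultimately show ?thesis by simp
qed

lemma hdist_gt_imp_sig: 
  assumes "Im z > 0" "Im w > 0" "0 \<le> r" "hdist z w > 2 * r"
  shows "sig z w > 2 * r\<^sup>2"
proof -
  have "cosh (2 * r) < cosh (hdist z w)" using assms hdist_nonneg[of z w] by (intro cosh_real_strict_mono) auto
  with cosh_hdist[OF assms(1,2)] cosh_two_ge[OF assms(3)] show ?thesis by simp
qed

lemma hdist_le_imp_sig:
  assumes "Im z > 0" "Im w > 0" "hdist z w \<le> R"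
  shows "sig z w \<le> exp R"
proof -
  have "0 \<le> hdist z w" by (rule hdist_nonneg[OF assms(1,2)])
  hence "cosh (hdist z w) \<le> cosh R" using assms(3) by (subst cosh_real_nonneg_le_iff) auto
  also have "cosh R \<le> exp R"
  proof -
    have "0 \<le> R" using \<open>0 \<le> hdist z w\<close> assms(3) by linarith
    hence "exp (- R) \<le> exp R" by simp
    thus ?thesis unfolding cosh_def by simp
  qed
  finally show ?thesis using cosh_hdist[OF assms(1,2)] by simp
qed

lemma hmob_denom_nz:
  assumes det: "a * d - b * c = 1" and z: "Im z > 0"
  shows "of_real c * z + of_real d \<noteq> 0"
proof
  assume h: "of_real c * z + of_real d = 0"
  hence "Im (of_real c * z + of_real d) = 0" by simp
  hence "c * Im z = 0" by simp
  hence c0: "c = 0" using z by simp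
  with h have "d = 0" by simp
  with c0 det show False by simp
qed

lemma hmob_Im:
  assumes det: "a * d - b * c = 1" and z: "Im z > 0"
  shows "Im (hmob a b c d z) = Im z / (cmod (of_real c * z + of_real d))\<^sup>2"
proof -
  have "Im (hmob a b c d z) = Im ((of_real a * z + of_real b) / (of_real c * z + of_real d))"
    using z by (simp add: hmob_def)
  also have "\<dots> = Im z * (a * d - b * c) / (cmod (of_real c * z + of_real d))\<^sup>2"
    unfolding Im_divide' by (simp add: algebra_simps)
  finally show ?thesis using det by simp
qed

lemma hmob_Im_pos:
  assumes det: "a * d - b * c = 1" and z: "Im z > 0"
  shows "Im (hmob a b c d z) > 0"
  using hmob_Im[OF det z] hmob_denom_nz[OF det z] z by simp

lemma hmob_diff:
  assumes det: "a * d - b * c = 1" and z: "Im z > 0" and w: "Im w > 0"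
  shows "hmob a b c d z - hmob a b c d w = (z - w) / ((of_real c * z + of_real d) * (of_real c * w + of_real d))"
proof -
  have nz: "of_real c * z + of_real d \<noteq> 0" "of_real c * w + of_real d \<noteq> 0"
    using hmob_denom_nz[OF det z] hmob_denom_nz[OF det w] by auto
  have detc: "of_real a * of_real d - of_real b * of_real c = (1::complex)"
    using det by (metis of_real_1 of_real_diff of_real_mult)
  have "hmob a b c d z - hmob a b c d w = (of_real a * z + of_real b) / (of_real c * z + of_real d) - (of_real a * w + of_real b) / (of_real c * w + of_real d)"
    using z w by (simp add: hmob_def)
  also have "\<dots> = ((of_real a * z + of_real b) * (of_real c * w + of_real d) - (of_real a * w + of_real b) * (of_real c * z + of_real d)) / ((of_real c * z + of_real d) * (of_real c * w + of_real d))"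
    using nz by (simp add: field_simps)
  also have "(of_real a * z + of_real b) * (of_real c * w + of_real d) - (of_real a * w + of_real b) * (of_real c * z + of_real d)
      = (z - w) * (of_real a * of_real d - of_real b * of_real c)"
    by (simp add: algebra_simps)
  finally show ?thesis using detc by simp
qed

lemma sig_hmob:
  assumes det: "a * d - b * c = 1" and z: "Im z > 0" and w: "Im w > 0"
  shows "sig (hmob a b c d z) (hmob a b c d w) = sig z w"
proof -
  define p where "p = cmod (of_real c * z + of_real d)"
  define q where "q = cmod (of_real c * w + of_real d)"
  have p: "p > 0" and q: "q > 0" unfolding p_def q_def using hmob_denom_nz[OF det z] hmob_denom_nz[OF det w] by auto
  have "sig (hmob a b c d z) (hmob a b c d w) = (cmod (z - w) / (p * q))\<^sup>2 / (2 * (Im z / p\<^sup>2) * (Im w / q\<^sup>2))"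
    unfolding sig_def hmob_diff[OF det z w] hmob_Im[OF det z] hmob_Im[OF det w] p_def q_def
    by (simp add: norm_divide norm_mult)
  also have "\<dots> = ((cmod (z - w))\<^sup>2 / (p * q)\<^sup>2) / ((2 * Im z * Im w) / (p * q)\<^sup>2)"
    by (simp add: power_divide power_mult_distrib)
  also have "\<dots> = sig z w" unfolding sig_def using p q by simp
  finally show ?thesis .
qed

lemma PSL2_Im_pos: "\<gamma> \<in> PSL2 \<Longrightarrow> Im z > 0 \<Longrightarrow> Im (\<gamma> z) > 0"
  unfolding PSL2_def using hmob_Im_pos by blast

lemma PSL2_sig: "\<gamma> \<in> PSL2 \<Longrightarrow> Im z > 0 \<Longrightarrow> Im w > 0 \<Longrightarrow> sig (\<gamma> z) (\<gamma> w) = sig z w"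
  unfolding PSL2_def using sig_hmob by blast

lemma PSL2_hdist: "\<gamma> \<in> PSL2 \<Longrightarrow> Im z > 0 \<Longrightarrow> Im w > 0 \<Longrightarrow> hdist (\<gamma> z) (\<gamma> w) = hdist z w"
  unfolding hdist_sig using PSL2_sig by simp

definition kc :: "complex \<Rightarrow> real \<Rightarrow> complex \<Rightarrow> int" where
  "kc z \<eta> w = \<lfloor>ln (Im w / Im z) / \<eta>\<rfloor>"

definition jc :: "complex \<Rightarrow> real \<Rightarrow> complex \<Rightarrow> int" where
  "jc z \<eta> w = \<lfloor>(Re w - Re z) / (\<eta> * Im z * exp (of_int (kc z \<eta> w) * \<eta>))\<rfloor>"

lemma exp_le_lin: assumes "0 \<le> (\<eta>::real)" "\<eta> \<le> 3/4" shows "exp \<eta> \<le> 1 + 4 * \<eta>"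
proof -
  have "1 - \<eta> \<le> exp (- \<eta>)" using exp_ge_add_one_self[of "-\<eta>"] by simp
  hence "(1 - \<eta>) * exp \<eta> \<le> exp (- \<eta>) * exp \<eta>" using assms by (intro mult_right_mono) auto
  hence "(1 - \<eta>) * exp \<eta> \<le> 1" by (simp flip: exp_add)
  hence e: "exp \<eta> \<le> 1 / (1 - \<eta>)" using assms by (simp add: field_simps)
  have "1 \<le> (1 + 4 * \<eta>) * (1 - \<eta>)" using assms by (simp add: algebra_simps power2_eq_square) (simp add: mult_left_mono)
  hence "1 / (1 - \<eta>) \<le> 1 + 4 * \<eta>" using assms by (simp add: divide_le_eq)
  with e show ?thesis by simp
qed

lemma floor_bounds:
  fixes v :: real
  shows "of_int \<lfloor>v\<rfloor> \<le> v" "v < of_int \<lfloor>v\<rfloor> + 1"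
  by linarith+

lemma cell_Y:
  assumes z: "Im z > 0" and w: "Im w > 0" and \<eta>: "\<eta> > 0"
  shows "Im z * exp (of_int (kc z \<eta> w) * \<eta>) \<le> Im w \<and> Im w < Im z * exp (of_int (kc z \<eta> w) * \<eta>) * exp \<eta>"
proof -
  define k where "k = kc z \<eta> w"
  have k1: "of_int k \<le> ln (Im w / Im z) / \<eta>" and k2: "ln (Im w / Im z) / \<eta> < of_int k + 1"
    unfolding k_def kc_def by linarith+
  have a: "of_int k * \<eta> \<le> ln (Im w / Im z)" using k1 \<eta> by (simp add: le_divide_eq)
  have b: "ln (Im w / Im z) < of_int k * \<eta> + \<eta>" using k2 \<eta> by (simp add: divide_less_eq algebra_simps)
  have e: "exp (ln (Im w / Im z)) = Im w / Im z" using z w by simp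
  have "exp (of_int k * \<eta>) \<le> Im w / Im z" using a e by (metis exp_le_cancel_iff)
  hence 1: "Im z * exp (of_int k * \<eta>) \<le> Im w" using z by (simp add: le_divide_eq mult.commute)
  have "Im w / Im z < exp (of_int k * \<eta> + \<eta>)" using b e by (metis exp_less_cancel_iff)
  hence 2: "Im w < Im z * exp (of_int k * \<eta>) * exp \<eta>" using z by (simp add: divide_less_eq exp_add mult_ac)
  show ?thesis using 1 2 unfolding k_def by simp
qed

lemma cell_close:
  assumes z: "Im z > 0" and w1: "Im w1 > 0" and w2: "Im w2 > 0" and \<eta>: "0 < \<eta>" "\<eta> \<le> 3/4"
    and k: "kc z \<eta> w1 = kc z \<eta> w2" and j: "jc z \<eta> w1 = jc z \<eta> w2"
  shows "sig w1 w2 < 9 * \<eta>\<^sup>2"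
proof -
  define k where "k = kc z \<eta> w1"
  define Y where "Y = Im z * exp (of_int k * \<eta>)"
  have Y: "Y > 0" unfolding Y_def using z by simp
  have c1: "Y \<le> Im w1" "Im w1 < Y * exp \<eta>" using cell_Y[OF z w1 \<eta>(1)] unfolding Y_def k_def by auto
  have c2: "Y \<le> Im w2" "Im w2 < Y * exp \<eta>" using cell_Y[OF z w2 \<eta>(1)] unfolding Y_def k_def k by auto
  have ee: "exp \<eta> \<le> 1 + 4 * \<eta>" by (rule exp_le_lin) (use \<eta> in auto)
  have dy: "\<bar>Im w1 - Im w2\<bar> \<le> 4 * \<eta> * Y"
  proof -
    have "Y * exp \<eta> \<le> Y * (1 + 4 * \<eta>)" using Y ee by (intro mult_left_mono) auto
    with c1 c2 show ?thesis by (simp add: algebra_simps abs_le_iff)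
  qed
  define j where "j = jc z \<eta> w1"
  have jb: "of_int j \<le> (Re w - Re z) / (\<eta> * Y) \<and> (Re w - Re z) / (\<eta> * Y) < of_int j + 1"
    if "jc z \<eta> w = j" "kc z \<eta> w = k" for w
    using that unfolding jc_def Y_def j_def by (simp add: mult.assoc) linarith
  have eY: "\<eta> * Y > 0" using Y \<eta> by simp
  have x1: "of_int j * (\<eta> * Y) \<le> Re w1 - Re z" "Re w1 - Re z < (of_int j + 1) * (\<eta> * Y)"
    using jb[of w1] eY unfolding j_def k_def by (auto simp: le_divide_eq divide_less_eq)
  have x2: "of_int j * (\<eta> * Y) \<le> Re w2 - Re z" "Re w2 - Re z < (of_int j + 1) * (\<eta> * Y)"
    using jb[of w2] eY unfolding j_def k_def k j by (auto simp: le_divide_eq divide_less_eq)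
  have dx: "\<bar>Re w1 - Re w2\<bar> \<le> \<eta> * Y" using x1 x2 by (simp add: algebra_simps abs_le_iff)
  have "(cmod (w1 - w2))\<^sup>2 = (Re w1 - Re w2)\<^sup>2 + (Im w1 - Im w2)\<^sup>2" by (simp add: cmod_power2)
  also have "\<dots> \<le> (\<eta> * Y)\<^sup>2 + (4 * \<eta> * Y)\<^sup>2"
    using dx dy by (intro add_mono) (simp_all add: abs_le_square_iff[symmetric] abs_of_nonneg eY Y \<eta>(1) less_imp_le)
  also have "\<dots> = 17 * \<eta>\<^sup>2 * Y\<^sup>2" by (simp add: power2_eq_square)
  finally have num: "(cmod (w1 - w2))\<^sup>2 \<le> 17 * \<eta>\<^sup>2 * Y\<^sup>2" .
  have den: "2 * Y\<^sup>2 \<le> 2 * Im w1 * Im w2"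
    using c1 c2 Y by (simp add: power2_eq_square mult.assoc mult_mono)
  have "sig w1 w2 = (cmod (w1 - w2))\<^sup>2 / (2 * Im w1 * Im w2)" unfolding sig_def ..
  also have "\<dots> \<le> 17 * \<eta>\<^sup>2 * Y\<^sup>2 / (2 * Y\<^sup>2)"
    by (rule frac_le) (use num den Y w1 w2 in auto)
  also have "\<dots> = 17 / 2 * \<eta>\<^sup>2" using Y by simp
  also have "\<dots> < 9 * \<eta>\<^sup>2" using \<eta> by simp
  finally show ?thesis .
qed

lemma ratio_bound:
  assumes z: "Im z > 0" and w: "Im w > 0" and s: "sig z w \<le> exp R" and R: "0 \<le> R"
  shows "Im w \<le> 4 * exp R * Im z" "Im z \<le> 4 * exp R * Im w" "(Re w - Re z)\<^sup>2 \<le> 2 * exp R * Im z * Im w"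
proof -
  have p: "0 < 2 * Im z * Im w" using z w by simp
  have "(cmod (z - w))\<^sup>2 \<le> exp R * (2 * Im z * Im w)" using s p unfolding sig_def by (simp add: divide_le_eq mult.commute)
  moreover have "(cmod (z - w))\<^sup>2 = (Re w - Re z)\<^sup>2 + (Im w - Im z)\<^sup>2" by (simp add: cmod_power2 power2_commute)
  ultimately have main: "(Re w - Re z)\<^sup>2 + (Im w - Im z)\<^sup>2 \<le> 2 * exp R * Im z * Im w" by (simp add: mult_ac)
  show "(Re w - Re z)\<^sup>2 \<le> 2 * exp R * Im z * Im w" using main by (smt (verit) zero_le_power2)
  have e1: "1 \<le> exp R" using R by simp
  have m2: "(Im w - Im z)\<^sup>2 \<le> 2 * exp R * Im z * Im w" using main by (smt (verit) zero_le_power2)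
  have "Im w * Im w \<le> (2 + 2 * exp R) * Im z * Im w"
    using m2 z w by (simp add: power2_eq_square algebra_simps) (smt (verit) mult_pos_pos)
  hence "Im w \<le> (2 + 2 * exp R) * Im z" using w by (simp add: mult.commute mult_le_cancel_left_pos)
  thus "Im w \<le> 4 * exp R * Im z" using e1 z by (smt (verit) mult_right_mono)
  have "Im z * Im z \<le> (2 + 2 * exp R) * Im w * Im z"
    using m2 z w by (simp add: power2_eq_square algebra_simps) (smt (verit) mult_pos_pos)
  hence "Im z \<le> (2 + 2 * exp R) * Im w" using z by (simp add: mult.commute mult_le_cancel_left_pos)
  thus "Im z \<le> 4 * exp R * Im w" using e1 w by (smt (verit) mult_right_mono)
qed

lemma ln4_le: "ln (4::real) \<le> 2"
proof -
  have "ln (4::real) = ln (2 ^ 2)" by simp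
  also have "\<dots> = real 2 * ln 2" by (rule ln_realpow)
  also have "\<dots> = 2 * ln 2" by simp
  also have "\<dots> \<le> 2" using ln_2_less_1 by simp
  finally show ?thesis .
qed

lemma cell_range:
  assumes z: "Im z > 0" and w: "Im w > 0" and s: "sig z w \<le> exp R" and R: "0 \<le> R" and \<eta>: "0 < \<eta>" and \<eta>1: "\<eta> \<le> 1"
  shows "\<bar>of_int (kc z \<eta> w)\<bar> \<le> (R + 2) / \<eta> + 1" "\<bar>of_int (jc z \<eta> w)\<bar> \<le> 3 * exp (2 * R + 3) / \<eta> + 1"
proof -
  note rb = ratio_bound[OF z w s R]
  define q where "q = Im w / Im z"
  have q: "q > 0" unfolding q_def using z w by simp
  have "q \<le> 4 * exp R" unfolding q_def using rb(1) z by (simp add: divide_le_eq)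
  hence "ln q \<le> ln (4 * exp R)" using q by simp
  also have "\<dots> = ln 4 + R" by (simp add: ln_mult)
  finally have lq1: "ln q \<le> R + 2" using ln4_le by simp
  have "1 / q \<le> 4 * exp R" unfolding q_def using rb(2) w z by (simp add: divide_le_eq)
  hence "ln (1 / q) \<le> ln (4 * exp R)" using q by simp
  also have "\<dots> = ln 4 + R" by (simp add: ln_mult)
  finally have lq2: "- ln q \<le> R + 2" using ln4_le q by (simp add: ln_div)
  have alq: "\<bar>ln q\<bar> \<le> R + 2" using lq1 lq2 by simp
  define k where "k = kc z \<eta> w"
  have k1: "of_int k \<le> ln q / \<eta>" "ln q / \<eta> < of_int k + 1" unfolding k_def kc_def q_def by linarith+
  have "ln q / \<eta> \<le> (R + 2) / \<eta>" using lq1 \<eta> by (simp add: divide_right_mono)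
  moreover have "- ((R + 2) / \<eta>) \<le> ln q / \<eta>" using lq2 \<eta> by (simp add: divide_right_mono divide_le_eq le_divide_eq)
  ultimately show "\<bar>of_int (kc z \<eta> w)\<bar> \<le> (R + 2) / \<eta> + 1" using k1 unfolding k_def by linarith
  define Y where "Y = Im z * exp (of_int k * \<eta>)"
  have "of_int k * \<eta> > ln q - \<eta>" using k1(2) \<eta> by (simp add: divide_less_eq algebra_simps)
  hence "of_int k * \<eta> \<ge> - (R + 3)" using lq2 \<eta>1 by simp
  hence Yb: "Im z * exp (- (R + 3)) \<le> Y" unfolding Y_def using z by simp
  have Y: "Y > 0" unfolding Y_def using z by simp
  have "(Re w - Re z)\<^sup>2 \<le> 2 * exp R * Im z * (4 * exp R * Im z)"
    using rb(3) rb(1) z by (smt (verit) exp_gt_zero mult_left_mono mult_pos_pos)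
  also have "\<dots> = 8 * (exp R * Im z)\<^sup>2" by (simp add: power2_eq_square)
  also have "\<dots> \<le> (3 * (exp R * Im z))\<^sup>2" using z by (simp add: power2_eq_square)
  finally have "\<bar>Re w - Re z\<bar> \<le> 3 * (exp R * Im z)"
    using z by (metis abs_le_square_iff abs_of_pos exp_gt_zero mult_pos_pos zero_less_numeral)
  hence "\<bar>Re w - Re z\<bar> / (\<eta> * Y) \<le> 3 * (exp R * Im z) / (\<eta> * (Im z * exp (- (R + 3))))"
    using Y Yb \<eta> z by (intro frac_le mult_left_mono) auto
  also have "\<dots> = 3 * exp (2 * R + 3) / \<eta>"
    using z \<eta> by (simp add: field_simps exp_minus flip: exp_add)
  finally have xb: "\<bar>(Re w - Re z) / (\<eta> * Y)\<bar> \<le> 3 * exp (2 * R + 3) / \<eta>"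
    using Y \<eta> by (simp add: abs_divide abs_mult)
  have j1: "of_int (jc z \<eta> w) \<le> (Re w - Re z) / (\<eta> * Y)" "(Re w - Re z) / (\<eta> * Y) < of_int (jc z \<eta> w) + 1"
    unfolding jc_def Y_def k_def by (simp_all add: mult.assoc)
  show "\<bar>of_int (jc z \<eta> w)\<bar> \<le> 3 * exp (2 * R + 3) / \<eta> + 1" using xb[unfolded abs_le_iff] j1 by linarith
qed

lemma floor_aux: "2 * (real_of_int \<lfloor>B\<rfloor> + 1) + 1 \<le> 2 * (B + 1) + 1"
  using of_int_floor_le[of B] by simp

lemma count_bound:
  fixes p :: "'a \<Rightarrow> complex"
  assumes z: "Im z > 0" and r: "0 < r" "r < 3" and R: "0 \<le> R"
    and A: "\<And>\<alpha>. \<alpha> \<in> A \<Longrightarrow> Im (p \<alpha>) > 0 \<and> sig z (p \<alpha>) \<le> exp R"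
    and sep: "\<And>\<alpha> \<beta>. \<alpha> \<in> A \<Longrightarrow> \<beta> \<in> A \<Longrightarrow> \<alpha> \<noteq> \<beta> \<Longrightarrow> sig (p \<alpha>) (p \<beta>) > 2 * r\<^sup>2"
  shows "finite A \<and> real (card A) \<le> 825 * exp (2 * R + 3) * (R + 1) / r\<^sup>2"
proof -
  define \<eta> where "\<eta> = r / 4"
  have \<eta>: "0 < \<eta>" "\<eta> \<le> 3/4" "\<eta> \<le> 1" unfolding \<eta>_def using r by auto
  define cell where "cell = (\<lambda>\<alpha>. (jc z \<eta> (p \<alpha>), kc z \<eta> (p \<alpha>)))"
  define J where "J = \<lfloor>3 * exp (2 * R + 3) / \<eta>\<rfloor> + 1"
  define K where "K = \<lfloor>(R + 2) / \<eta>\<rfloor> + 1"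
  have inj: "inj_on cell A"
  proof (rule inj_onI, rule ccontr)
    fix \<alpha> \<beta> assume a: "\<alpha> \<in> A" and b: "\<beta> \<in> A" and c: "cell \<alpha> = cell \<beta>" and ne: "\<alpha> \<noteq> \<beta>"
    have "sig (p \<alpha>) (p \<beta>) < 9 * \<eta>\<^sup>2"
      by (rule cell_close[OF z _ _ \<eta>(1,2)]) (use A a b c in \<open>auto simp: cell_def\<close>)
    also have "9 * \<eta>\<^sup>2 = 9 / 16 * r\<^sup>2" unfolding \<eta>_def by (simp add: power2_eq_square)
    also have "\<dots> \<le> 2 * r\<^sup>2" by simp
    finally show False using sep[OF a b ne] by simp
  qed
  have sub: "cell ` A \<subseteq> {-J..J} \<times> {-K..K}"
  proof
    fix c assume "c \<in> cell ` A"
    then obtain \<alpha> where a: "\<alpha> \<in> A" and c: "c = cell \<alpha>" by auto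
    have pa: "Im (p \<alpha>) > 0" "sig z (p \<alpha>) \<le> exp R" using A[OF a] by auto
    note cr = cell_range[OF z pa R \<eta>(1) \<eta>(3)]
    have "\<bar>jc z \<eta> (p \<alpha>)\<bar> \<le> J"
    proof -
      have "of_int (\<bar>jc z \<eta> (p \<alpha>)\<bar> - 1) \<le> 3 * exp (2 * R + 3) / \<eta>" using cr(2) by simp
      then have "\<bar>jc z \<eta> (p \<alpha>)\<bar> - 1 \<le> \<lfloor>3 * exp (2 * R + 3) / \<eta>\<rfloor>" by (simp only: le_floor_iff)
      then show ?thesis unfolding J_def by simp
    qed
    moreover have "\<bar>kc z \<eta> (p \<alpha>)\<bar> \<le> K"
    proof -
      have "of_int (\<bar>kc z \<eta> (p \<alpha>)\<bar> - 1) \<le> (R + 2) / \<eta>" using cr(1) by simp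
      then have "\<bar>kc z \<eta> (p \<alpha>)\<bar> - 1 \<le> \<lfloor>(R + 2) / \<eta>\<rfloor>" by (simp only: le_floor_iff)
      then show ?thesis unfolding K_def by simp
    qed
    ultimately show "c \<in> {-J..J} \<times> {-K..K}" unfolding c cell_def by auto
  qed
  have fin: "finite A" using inj sub by (meson finite_SigmaI finite_atLeastAtMost_int inj_on_finite)
  have "card A \<le> card ({-J..J} \<times> {-K..K})"
    using inj sub by (intro card_inj_on_le) auto
  also have "\<dots> = nat (2 * J + 1) * nat (2 * K + 1)" by (simp add: card_cartesian_product)
  finally have cA: "real (card A) \<le> real (nat (2 * J + 1)) * real (nat (2 * K + 1))"
    by (metis of_nat_le_iff of_nat_mult)
  have J0: "0 \<le> J" unfolding J_def using \<eta> by (simp add: add_increasing)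
  have K0: "0 \<le> K" unfolding K_def using \<eta> R by (simp add: add_increasing)
  have e1: "1 \<le> exp (2 * R + 3)" using R by simp
  have rJ: "real (nat (2 * J + 1)) \<le> 33 * exp (2 * R + 3) / r"
  proof -
    have "real (nat (2 * J + 1)) = 2 * of_int J + 1" using J0 by simp
    also have "\<dots> \<le> 2 * (3 * exp (2 * R + 3) / \<eta> + 1) + 1"
      unfolding J_def of_int_add of_int_1 by (rule floor_aux)
    also have "\<dots> = 24 * exp (2 * R + 3) / r + 3" unfolding \<eta>_def by simp
    also have "\<dots> \<le> 24 * exp (2 * R + 3) / r + 9 * exp (2 * R + 3) / r"
    proof -
      have "3 * r \<le> 9 * exp (2 * R + 3)" using r e1 by linarith
      then have "3 \<le> 9 * exp (2 * R + 3) / r" using r by (simp add: le_divide_eq)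
      then show ?thesis by simp
    qed
    also have "\<dots> = 33 * exp (2 * R + 3) / r" by (simp add: field_simps)
    finally show ?thesis .
  qed
  have rK: "real (nat (2 * K + 1)) \<le> 25 * (R + 1) / r"
  proof -
    have "real (nat (2 * K + 1)) = 2 * of_int K + 1" using K0 by simp
    also have "\<dots> \<le> 2 * ((R + 2) / \<eta> + 1) + 1"
      unfolding K_def of_int_add of_int_1 by (rule floor_aux)
    also have "\<dots> = 8 * (R + 2) / r + 3" unfolding \<eta>_def by simp
    also have "\<dots> \<le> 8 * (R + 2) / r + 9 / r"
    proof -
      have "3 \<le> 9 / r" using r by (simp add: le_divide_eq)
      then show ?thesis by simp
    qed
    also have "\<dots> = (8 * R + 25) / r" by (simp add: add_divide_distrib[symmetric] algebra_simps)
    also have "\<dots> \<le> 25 * (R + 1) / r" using r R by (intro divide_right_mono) auto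
    finally show ?thesis .
  qed
  have "real (card A) \<le> (33 * exp (2 * R + 3) / r) * (25 * (R + 1) / r)"
    using cA rJ rK by (smt (verit) mult_mono of_nat_0_le_iff)
  also have "\<dots> = 825 * exp (2 * R + 3) * (R + 1) / r\<^sup>2" by (simp add: power2_eq_square field_simps)
  finally show ?thesis using fin by simp
qed

lemma q_bounds: "exp (-3/4::real) \<le> 4/7" "1 / (1 - exp (-3/4::real)) \<le> 7/3"
proof -
  have "1 + 3/4 \<le> exp (3/4::real)" by (rule exp_ge_add_one_self)
  hence "exp (-3/4::real) \<le> 1 / (7/4)" by (simp add: exp_minus inverse_eq_divide divide_le_eq)
  thus q: "exp (-3/4::real) \<le> 4/7" by simp
  have "3/7 \<le> 1 - exp (-3/4::real)" using q by simp
  thus "1 / (1 - exp (-3/4::real)) \<le> 7/3" by (simp add: divide_le_eq)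
qed

lemma kplus2: "real k + 2 \<le> 8 * exp (real k / 4)"
proof -
  have "1 + real k / 4 \<le> exp (real k / 4)" by (rule exp_ge_add_one_self)
  hence "8 * (1 + real k / 4) \<le> 8 * exp (real k / 4)" by (rule mult_left_mono) simp
  moreover have "real k + 2 \<le> 8 * (1 + real k / 4)" by simp
  ultimately show ?thesis by linarith
qed

lemma finite_sum_exp_bound:
  fixes d :: "'a \<Rightarrow> real"
  assumes F: "finite F" and r: "r > 0" and m: "m > 0"
    and dm: "\<And>x. x \<in> F \<Longrightarrow> d x \<ge> m"
    and cnt: "\<And>R. R \<ge> 0 \<Longrightarrow> real (card {x\<in>F. d x \<le> R}) \<le> 825 * exp (2 * R + 3) * (R + 1) / r\<^sup>2"
  shows "(\<Sum>x\<in>F. exp (- 3 * d x)) \<le> 6600 * exp 5 * (7/3) * exp (3/4) * exp (- 3 * m / 4) / r\<^sup>2"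
proof (cases "F = {}")
  case True then show ?thesis using r by simp
next
  case False
  define q :: real where "q = exp (-3/4)"
  have q0: "0 < q" "q < 1" unfolding q_def by auto
  define kf where "kf = (\<lambda>x. nat \<lfloor>d x\<rfloor>)"
  define k0 where "k0 = nat \<lfloor>m\<rfloor>"
  define M where "M = Max (kf ` F)"
  define C1 where "C1 = 6600 * exp 5 / r\<^sup>2"
  have C1: "C1 \<ge> 0" unfolding C1_def by simp
  have d0: "\<And>x. x \<in> F \<Longrightarrow> d x \<ge> 0" using dm m by force
  have grp: "(\<Sum>x\<in>F. exp (- 3 * d x)) = (\<Sum>k\<in>kf ` F. \<Sum>x\<in>{x. x \<in> F \<and> kf x = k}. exp (- 3 * d x))"
    by (rule sum.image_gen[OF F])
  have inner: "(\<Sum>x\<in>{x. x \<in> F \<and> kf x = k}. exp (- 3 * d x)) \<le> C1 * q ^ k" for k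
  proof -
    have "(\<Sum>x\<in>{x. x \<in> F \<and> kf x = k}. exp (- 3 * d x)) \<le> (\<Sum>x\<in>{x. x \<in> F \<and> kf x = k}. exp (- 3 * real k))"
    proof (intro sum_mono)
      fix x assume "x \<in> {x. x \<in> F \<and> kf x = k}"
      hence x: "x \<in> F" "kf x = k" by auto
      have "real k \<le> d x" using x d0[of x] unfolding kf_def by (simp add: of_nat_nat) linarith
      thus "exp (- 3 * d x) \<le> exp (- 3 * real k)" by simp
    qed
    also have "\<dots> = real (card {x. x \<in> F \<and> kf x = k}) * exp (- 3 * real k)" by simp
    also have "\<dots> \<le> real (card {x\<in>F. d x \<le> real k + 1}) * exp (- 3 * real k)"
    proof -
      have "{x. x \<in> F \<and> kf x = k} \<subseteq> {x\<in>F. d x \<le> real k + 1}"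
      proof
        fix x assume "x \<in> {x. x \<in> F \<and> kf x = k}"
        hence x: "x \<in> F" "kf x = k" by auto
        have "d x < real k + 1" using x d0[of x] unfolding kf_def by (simp add: of_nat_nat) linarith
        thus "x \<in> {x\<in>F. d x \<le> real k + 1}" using x by simp
      qed
      hence "card {x. x \<in> F \<and> kf x = k} \<le> card {x\<in>F. d x \<le> real k + 1}" using F by (intro card_mono) auto
      thus ?thesis by (intro mult_right_mono) auto
    qed
    also have "\<dots> \<le> 825 * exp (2 * (real k + 1) + 3) * (real k + 1 + 1) / r\<^sup>2 * exp (- 3 * real k)"
      by (intro mult_right_mono cnt) auto
    also have "\<dots> = 825 * (real k + 2) / r\<^sup>2 * (exp (2 * (real k + 1) + 3) * exp (- 3 * real k))"
      by (simp add: algebra_simps)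
    also have "exp (2 * (real k + 1) + 3) * exp (- 3 * real k) = exp 5 * exp (- real k)"
      by (simp add: exp_add[symmetric] algebra_simps)
    also have "825 * (real k + 2) / r\<^sup>2 * (exp 5 * exp (- real k)) = 825 * exp 5 / r\<^sup>2 * ((real k + 2) * exp (- real k))"
      by (simp add: algebra_simps)
    also have "\<dots> \<le> 825 * exp 5 / r\<^sup>2 * (8 * exp (real k / 4) * exp (- real k))"
      using kplus2[of k] by (intro mult_left_mono mult_right_mono) auto
    also have "\<dots> = C1 * (exp (real k / 4) * exp (- real k))" unfolding C1_def by (simp add: algebra_simps)
    also have "exp (real k / 4) * exp (- real k) = exp (real k * (-3/4))" by (simp add: exp_add[symmetric] algebra_simps)
    also have "C1 * exp (real k * (-3/4)) = C1 * q ^ k" unfolding q_def by (simp add: exp_of_nat_mult[symmetric])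
    finally show ?thesis .
  qed
  have sub: "kf ` F \<subseteq> {k0..M}"
  proof
    fix k assume "k \<in> kf ` F"
    then obtain x where x: "x \<in> F" "k = kf x" by auto
    have "k0 \<le> k" unfolding k0_def x(2) kf_def using dm[OF x(1)] by (intro nat_mono floor_mono)
    moreover have "k \<le> M" unfolding M_def using F x by (intro Max_ge) auto
    ultimately show "k \<in> {k0..M}" by simp
  qed
  have "(\<Sum>x\<in>F. exp (- 3 * d x)) \<le> (\<Sum>k\<in>kf ` F. C1 * q ^ k)"
    unfolding grp by (intro sum_mono inner)
  also have "\<dots> \<le> (\<Sum>k\<in>{k0..M}. C1 * q ^ k)"
    using sub q0 C1 by (intro sum_mono2) auto
  also have "\<dots> = C1 * (\<Sum>k\<in>{k0..M}. q ^ k)" by (simp add: sum_distrib_left)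
  also have "(\<Sum>k\<in>{k0..M}. q ^ k) \<le> q ^ k0 / (1 - q)"
  proof -
    have "k0 \<le> M" using sub False by auto
    hence "(\<Sum>k\<in>{k0..M}. q ^ k) = (q ^ k0 - q ^ Suc M) / (1 - q)" using q0 by (simp add: sum_gp)
    also have "\<dots> \<le> q ^ k0 / (1 - q)" using q0 by (intro divide_right_mono) auto
    finally show ?thesis .
  qed
  hence "C1 * (\<Sum>k\<in>{k0..M}. q ^ k) \<le> C1 * (q ^ k0 / (1 - q))" using C1 by (intro mult_left_mono)
  also have "q ^ k0 / (1 - q) \<le> exp (3/4) * exp (- 3 * m / 4) * (7/3)"
  proof -
    have "q ^ k0 = exp (real k0 * (-3/4))" unfolding q_def by (simp add: exp_of_nat_mult[symmetric])
    also have "\<dots> \<le> exp ((m - 1) * (-3/4))"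
    proof -
      have "m - 1 \<le> real k0" unfolding k0_def using m by (simp add: of_nat_nat)
      thus ?thesis by simp
    qed
    also have "\<dots> = exp (3/4) * exp (- 3 * m / 4)" by (simp add: field_simps flip: exp_add)
    finally have a: "q ^ k0 \<le> exp (3/4) * exp (- 3 * m / 4)" .
    have b: "1 / (1 - q) \<le> 7/3" unfolding q_def by (rule q_bounds(2))
    have "q ^ k0 / (1 - q) = q ^ k0 * (1 / (1 - q))" by simp
    also have "\<dots> \<le> (exp (3/4) * exp (- 3 * m / 4)) * (7/3)"
      using a b q0 by (intro mult_mono) auto
    finally show ?thesis .
  qed
  hence "C1 * (q ^ k0 / (1 - q)) \<le> C1 * (exp (3/4) * exp (- 3 * m / 4) * (7/3))" using C1 by (intro mult_left_mono)
  finally show ?thesis unfolding C1_def by (simp add: field_simps)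
qed

lemma infsum_norm_le:
  fixes f :: "'a \<Rightarrow> complex"
  assumes fin: "\<And>F. finite F \<Longrightarrow> F \<subseteq> A \<Longrightarrow> (\<Sum>x\<in>F. cmod (f x)) \<le> B" and B: "0 \<le> B"
  shows "cmod (infsum f A) \<le> B"
proof (cases "f summable_on A")
  case True
  hence abs: "(\<lambda>x. norm (f x)) summable_on A" by (simp add: summable_on_iff_abs_summable_on_complex)
  have "cmod (infsum f A) \<le> infsum (\<lambda>x. cmod (f x)) A" by (rule norm_infsum_bound[OF abs])
  also have "\<dots> \<le> B" by (rule infsum_le_finite_sums[OF abs fin])
  finally show ?thesis .
next
  case False
  then show ?thesis using B by (simp add: infsum_not_exists)
qed

lemma orbit_sig_sep:
  assumes sg: "subgroup_PSL2 \<Gamma>" and z: "Im z > 0" and r0: "0 \<le> r"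
    and dist: "\<And>\<gamma>. \<gamma> \<in> \<Gamma> - {id} \<Longrightarrow> hdist z (\<gamma> z) > 2 * r"
    and g: "\<gamma>1 \<in> \<Gamma>" "\<gamma>2 \<in> \<Gamma>" "\<gamma>1 \<noteq> \<gamma>2"
  shows "sig (\<gamma>1 z) (\<gamma>2 z) > 2 * r\<^sup>2"
proof -
  have sub: "\<Gamma> \<subseteq> PSL2" and cl: "\<And>\<gamma> \<delta>. \<gamma> \<in> \<Gamma> \<Longrightarrow> \<delta> \<in> \<Gamma> \<Longrightarrow> \<gamma> \<circ> \<delta> \<in> \<Gamma>"
    and inv: "\<And>\<gamma>. \<gamma> \<in> \<Gamma> \<Longrightarrow> \<exists>\<delta>\<in>\<Gamma>. \<gamma> \<circ> \<delta> = id"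
    using sg unfolding subgroup_PSL2_def by auto
  obtain \<delta> where \<delta>: "\<delta> \<in> \<Gamma>" "\<gamma>1 \<circ> \<delta> = id" using inv[OF g(1)] by blast
  define \<gamma>' where "\<gamma>' = \<delta> \<circ> \<gamma>2"
  have g': "\<gamma>' \<in> \<Gamma>" unfolding \<gamma>'_def by (rule cl[OF \<delta>(1) g(2)])
  have ne: "\<gamma>' \<noteq> id"
  proof
    assume "\<gamma>' = id"
    hence "\<gamma>1 \<circ> \<gamma>' = \<gamma>1" by simp
    moreover have "\<gamma>1 \<circ> \<gamma>' = \<gamma>2" unfolding \<gamma>'_def using \<delta>(2) by (metis comp_assoc id_comp)
    ultimately show False using g(3) by simp
  qed
  have w: "Im (\<gamma>' z) > 0" using PSL2_Im_pos[of \<gamma>' z] g' sub z by auto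
  have e: "\<gamma>1 (\<gamma>' z) = \<gamma>2 z" unfolding \<gamma>'_def using \<delta>(2) by (metis comp_apply id_apply)
  have "sig (\<gamma>1 z) (\<gamma>2 z) = sig (\<gamma>1 z) (\<gamma>1 (\<gamma>' z))" using e by simp
  also have "\<dots> = sig z (\<gamma>' z)" using PSL2_sig[of \<gamma>1 z "\<gamma>' z"] g(1) sub z w by auto
  finally have "sig (\<gamma>1 z) (\<gamma>2 z) = sig z (\<gamma>' z)" .
  moreover have "sig z (\<gamma>' z) > 2 * r\<^sup>2"
    by (rule hdist_gt_imp_sig[OF z w r0]) (use dist g' ne in auto)
  ultimately show ?thesis by simp
qed

lemma pointwise_bound:
  assumes ab: "0 \<le> a" "a \<le> b" "b \<le> 1" and t: "0 < t" and sg: "subgroup_PSL2 \<Gamma>"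
    and z: "Im z > 0" and r: "0 < r" "r < 3" and m: "m > 0"
    and dist: "\<And>\<gamma>. \<gamma> \<in> \<Gamma> - {id} \<Longrightarrow> hdist z (\<gamma> z) > 2 * r \<and> hdist z (\<gamma> z) \<ge> m"
  shows "cmod (infsum (\<lambda>\<gamma>. K_t a b t (hdist z (\<gamma> z))) (\<Gamma> - {id}))
          \<le> 4 * Lam t / r * (6600 * exp 5 * (7/3) * exp (3/4) * exp (- 3 * m / 4) / r\<^sup>2)"
proof (rule infsum_norm_le)
  have sub: "\<Gamma> \<subseteq> PSL2" using sg unfolding subgroup_PSL2_def by auto
  have L0: "Lam t > 0" by (rule Lam_pos[OF t])
  show "0 \<le> 4 * Lam t / r * (6600 * exp 5 * (7/3) * exp (3/4) * exp (- 3 * m / 4) / r\<^sup>2)"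
    using L0 r by simp
  fix F assume F: "finite F" "F \<subseteq> \<Gamma> - {id}"
  define d where "d = (\<lambda>\<gamma>. hdist z (\<gamma> z))"
  have Im\<gamma>: "Im (\<gamma> z) > 0" if "\<gamma> \<in> \<Gamma>" for \<gamma> using PSL2_Im_pos[of \<gamma> z] sub that z by auto
  have pt: "cmod (K_t a b t (d \<gamma>)) \<le> 4 * Lam t / r * exp (- 3 * d \<gamma>)" if "\<gamma> \<in> F" for \<gamma>
  proof -
    have d2: "d \<gamma> > 2 * r" using dist F that unfolding d_def by auto
    have dp: "d \<gamma> > 0" using d2 r by simp
    have "cmod (K_t a b t (d \<gamma>)) \<le> 2 * Lam t * exp (- 3 * d \<gamma>) / sqrt (d \<gamma>)" by (rule K_bound[OF ab t dp])
    also have "\<dots> \<le> 2 * Lam t * exp (- 3 * d \<gamma>) / (r / 2)"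
    proof (rule divide_left_mono)
      have "r * r \<le> 3 * r" using r by (intro mult_right_mono) auto
      hence "r * r \<le> d \<gamma> * 4" using d2 r by linarith
      hence "(r / 2)\<^sup>2 \<le> d \<gamma>" by (simp add: power2_eq_square)
      thus "r / 2 \<le> sqrt (d \<gamma>)" by (rule real_le_rsqrt)
      show "0 \<le> 2 * Lam t * exp (- 3 * d \<gamma>)" using L0 by simp
      show "0 < sqrt (d \<gamma>) * (r / 2)" using dp r by simp
    qed
    also have "\<dots> = 4 * Lam t / r * exp (- 3 * d \<gamma>)" by simp
    finally show ?thesis .
  qed
  have "(\<Sum>\<gamma>\<in>F. exp (- 3 * d \<gamma>)) \<le> 6600 * exp 5 * (7/3) * exp (3/4) * exp (- 3 * m / 4) / r\<^sup>2"
  proof (rule finite_sum_exp_bound[OF F(1) r(1) m])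
    show "\<And>x. x \<in> F \<Longrightarrow> m \<le> d x" using dist F unfolding d_def by auto
    fix R :: real assume R: "0 \<le> R"
    have "finite {\<gamma>\<in>F. d \<gamma> \<le> R} \<and> real (card {\<gamma>\<in>F. d \<gamma> \<le> R}) \<le> 825 * exp (2 * R + 3) * (R + 1) / r\<^sup>2"
    proof (rule count_bound[OF z r R, where p="\<lambda>\<gamma>. \<gamma> z"])
      fix \<alpha> assume a: "\<alpha> \<in> {\<gamma>\<in>F. d \<gamma> \<le> R}"
      hence a\<Gamma>: "\<alpha> \<in> \<Gamma>" using F by auto
      show "0 < Im (\<alpha> z) \<and> sig z (\<alpha> z) \<le> exp R"
        using Im\<gamma>[OF a\<Gamma>] hdist_le_imp_sig[OF z Im\<gamma>[OF a\<Gamma>]] a unfolding d_def by auto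
    next
      fix \<alpha> \<beta> assume a: "\<alpha> \<in> {\<gamma>\<in>F. d \<gamma> \<le> R}" and b: "\<beta> \<in> {\<gamma>\<in>F. d \<gamma> \<le> R}" and ne: "\<alpha> \<noteq> \<beta>"
      show "2 * r\<^sup>2 < sig (\<alpha> z) (\<beta> z)"
        by (rule orbit_sig_sep[OF sg z _ _ _ _ ne]) (use r dist a b F in auto)
    qed
    then show "real (card {\<gamma>\<in>F. d \<gamma> \<le> R}) \<le> 825 * exp (2 * R + 3) * (R + 1) / r\<^sup>2" by simp
  qed
  hence "4 * Lam t / r * (\<Sum>\<gamma>\<in>F. exp (- 3 * d \<gamma>)) \<le> 4 * Lam t / r * (6600 * exp 5 * (7/3) * exp (3/4) * exp (- 3 * m / 4) / r\<^sup>2)"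
    using L0 r by (intro mult_left_mono) auto
  moreover have "(\<Sum>\<gamma>\<in>F. cmod (K_t a b t (d \<gamma>))) \<le> 4 * Lam t / r * (\<Sum>\<gamma>\<in>F. exp (- 3 * d \<gamma>))"
    using pt by (simp add: sum_distrib_left sum_mono)
  ultimately show "(\<Sum>\<gamma>\<in>F. cmod (K_t a b t (hdist z (\<gamma> z)))) \<le> 4 * Lam t / r * (6600 * exp 5 * (7/3) * exp (3/4) * exp (- 3 * m / 4) / r\<^sup>2)"
    unfolding d_def by simp
qed

lemma integral_le_from_nn_M:
  fixes q :: "'a \<Rightarrow> real"
  assumes q: "\<And>x. 0 \<le> q x" and nn: "(\<integral>\<^sup>+x. ennreal (q x) \<partial>M) \<le> ennreal B" and B: "0 \<le> B"
  shows "(LINT x|M. q x) \<le> B"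
proof (cases "integrable M q")
  case True
  then have "(LINT x|M. q x) = enn2real (\<integral>\<^sup>+x. ennreal (q x) \<partial>M)"
    using q by (intro integral_eq_nn_integral) auto
  also have "\<dots> \<le> enn2real (ennreal B)" using nn by (intro enn2real_mono) auto
  finally show ?thesis using B by simp
next
  case False
  then show ?thesis using B by (simp add: not_integrable_integral_eq)
qed

lemma integral_bound_muH:
  fixes f :: "complex \<Rightarrow> complex"
  assumes D: "D \<in> sets borel" and T: "T \<in> sets borel" "T \<subseteq> D" and fin: "emeasure muH D < \<infinity>"
    and P: "0 \<le> P1" "0 \<le> P2"
    and bnd: "\<And>z. z \<in> D \<Longrightarrow> cmod (f z) \<le> P1 + (if z \<in> T then P2 else 0)"
  shows "cmod (LINT z:D|muH. f z) \<le> P1 * measure muH D + P2 * measure muH T"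
proof -
  have sD: "D \<in> sets muH" and sT: "T \<in> sets muH" using D T by (simp_all add: muH_def)
  have finT: "emeasure muH T < \<infinity>" using fin T(2) sD sT by (meson emeasure_mono le_less_trans)
  have eD: "emeasure muH D = ennreal (measure muH D)" using fin by (simp add: emeasure_eq_ennreal_measure)
  have eT: "emeasure muH T = ennreal (measure muH T)" using finT by (simp add: emeasure_eq_ennreal_measure)
  have "cmod (LINT z:D|muH. f z) \<le> (LINT z|muH. norm (indicator D z *\<^sub>R f z))"
    unfolding set_lebesgue_integral_def by (rule integral_norm_bound)
  also have "\<dots> \<le> P1 * measure muH D + P2 * measure muH T"
  proof (rule integral_le_from_nn_M)
    show "0 \<le> P1 * measure muH D + P2 * measure muH T" using P by simp
    have "(\<integral>\<^sup>+z. ennreal (norm (indicator D z *\<^sub>R f z)) \<partial>muH) \<le>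
          (\<integral>\<^sup>+z. ennreal P1 * indicator D z + ennreal P2 * indicator T z \<partial>muH)"
    proof (intro nn_integral_mono)
      fix z
      show "ennreal (norm (indicator D z *\<^sub>R f z)) \<le> ennreal P1 * indicator D z + ennreal P2 * indicator T z"
      proof (cases "z \<in> D")
        case False
        then show ?thesis using T(2) by (auto simp: indicator_def)
      next
        case True
        have "cmod (f z) \<le> P1 + (if z \<in> T then P2 else 0)" by (rule bnd[OF True])
        then show ?thesis using True P
          by (cases "z \<in> T") (auto simp: indicator_def ennreal_plus[symmetric] simp del: ennreal_plus)
      qed
    qed
    also have "\<dots> = ennreal P1 * emeasure muH D + ennreal P2 * emeasure muH T"
      using sD sT by (simp add: nn_integral_add nn_integral_cmult_indicator)
    also have "\<dots> = ennreal (P1 * measure muH D + P2 * measure muH T)"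
      unfolding eD eT using P by (simp add: ennreal_mult[symmetric] ennreal_plus[symmetric] del: ennreal_plus)
    finally show "(\<integral>\<^sup>+z. ennreal (norm (indicator D z *\<^sub>R f z)) \<partial>muH) \<le> ennreal (P1 * measure muH D + P2 * measure muH T)" .
  qed (auto)
  finally show ?thesis .
qed

lemma injrad_facts:
  assumes sg: "subgroup_PSL2 \<Gamma>" and ne: "\<Gamma> - {id} \<noteq> {}" and z: "Im z > 0"
  shows "\<And>\<gamma>. \<gamma> \<in> \<Gamma> - {id} \<Longrightarrow> 2 * injrad_at \<Gamma> z \<le> hdist z (\<gamma> z)"
    and "0 \<le> injrad_at \<Gamma> z"
    and "injrad \<Gamma> \<le> injrad_at \<Gamma> z"
    and "\<And>L. injrad_at \<Gamma> z < L \<longleftrightarrow> (\<exists>\<gamma>\<in>\<Gamma> - {id}. hdist z (\<gamma> z) < 2 * L)"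
proof -
  have sub: "\<Gamma> \<subseteq> PSL2" using sg unfolding subgroup_PSL2_def by auto
  have nn: "\<And>w \<gamma>. Im w > 0 \<Longrightarrow> \<gamma> \<in> \<Gamma> \<Longrightarrow> 0 \<le> hdist w (\<gamma> w)"
    using hdist_nonneg PSL2_Im_pos sub by blast
  have bdd: "\<And>w. Im w > 0 \<Longrightarrow> bdd_below ((\<lambda>\<gamma>. hdist w (\<gamma> w)) ` (\<Gamma> - {id}))"
    using nn by (intro bdd_belowI[where m=0]) auto
  have ia0: "\<And>w. Im w > 0 \<Longrightarrow> 0 \<le> injrad_at \<Gamma> w"
    unfolding injrad_at_def using nn ne by (auto intro!: cInf_greatest)
  show "2 * injrad_at \<Gamma> z \<le> hdist z (\<gamma> z)" if "\<gamma> \<in> \<Gamma> - {id}" for \<gamma>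
    unfolding injrad_at_def using cInf_lower[OF imageI[OF that] bdd[OF z]] by simp
  show "0 \<le> injrad_at \<Gamma> z" by (rule ia0[OF z])
  show "injrad \<Gamma> \<le> injrad_at \<Gamma> z"
    unfolding injrad_def using z ia0
    by (intro cInf_lower) (auto simp: Hplane_def intro!: bdd_belowI[where m=0])
  show "injrad_at \<Gamma> z < L \<longleftrightarrow> (\<exists>\<gamma>\<in>\<Gamma> - {id}. hdist z (\<gamma> z) < 2 * L)" for L
  proof -
    have "injrad_at \<Gamma> z < L \<longleftrightarrow> (INF \<gamma>\<in>\<Gamma> - {id}. hdist z (\<gamma> z)) < 2 * L"
      unfolding injrad_at_def by linarith
    also have "\<dots> \<longleftrightarrow> (\<exists>\<gamma>\<in>\<Gamma> - {id}. hdist z (\<gamma> z) < 2 * L)"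
      using cInf_less_iff[of "(\<lambda>\<gamma>. hdist z (\<gamma> z)) ` (\<Gamma> - {id})" "2 * L"] ne bdd[OF z] by auto
    finally show ?thesis .
  qed
qed

lemma hdist_orbit_cont:
  assumes "\<gamma> \<in> PSL2"
  shows "continuous_on Hplane (\<lambda>z. hdist z (\<gamma> z))"
proof -
  obtain a b c d where det: "a * d - b * c = 1" and g: "\<gamma> = hmob a b c d"
    using assms unfolding PSL2_def by auto
  define \<phi> where "\<phi> = (\<lambda>z::complex. (of_real a * z + of_real b) / (of_real c * z + of_real d))"
  have eq: "\<gamma> z = \<phi> z" if "z \<in> Hplane" for z using that unfolding g hmob_def \<phi>_def Hplane_def by auto
  have nz: "of_real c * z + of_real d \<noteq> 0" if "z \<in> Hplane" for z
    using hmob_denom_nz[OF det] that unfolding Hplane_def by auto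
  have Imp: "Im (\<phi> z) > 0" if "z \<in> Hplane" for z
    using hmob_Im_pos[OF det, of z] eq[OF that] that unfolding Hplane_def g by auto
  have c\<phi>: "continuous_on Hplane \<phi>" unfolding \<phi>_def using nz by (auto intro!: continuous_intros)
  have "continuous_on Hplane (\<lambda>z. arcosh (1 + (cmod (z - \<phi> z))\<^sup>2 / (2 * Im z * Im (\<phi> z))))"
  proof (rule continuous_on_compose2[OF continuous_on_arcosh[OF order.refl]])
    show "continuous_on Hplane (\<lambda>z. 1 + (cmod (z - \<phi> z))\<^sup>2 / (2 * Im z * Im (\<phi> z)))"
      using Imp c\<phi> by (auto intro!: continuous_intros simp: Hplane_def) (metis less_irrefl)
    show "(\<lambda>z. 1 + (cmod (z - \<phi> z))\<^sup>2 / (2 * Im z * Im (\<phi> z))) ` Hplane \<subseteq> {1..}"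
      using Imp by (auto simp: Hplane_def) (metis less_imp_le mult_pos_pos zero_less_numeral divide_nonneg_pos zero_le_power2)
  qed
  then show ?thesis
    by (rule continuous_on_cong[THEN iffD1, rotated 2]) (auto simp: hdist_def eq)
qed

lemma thin_set_borel:
  assumes sg: "subgroup_PSL2 \<Gamma>" and ne: "\<Gamma> - {id} \<noteq> {}" and D: "D \<in> sets borel" "D \<subseteq> Hplane"
  shows "{z\<in>D. injrad_at \<Gamma> z < L} \<in> sets borel"
proof -
  have sub: "\<Gamma> \<subseteq> PSL2" using sg unfolding subgroup_PSL2_def by auto
  define U where "U = (\<Union>\<gamma>\<in>\<Gamma> - {id}. Hplane \<inter> (\<lambda>z. hdist z (\<gamma> z)) -` {..<2 * L})"
  have oH: "open Hplane" unfolding Hplane_def by (rule open_halfspace_Im_gt)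
  have "open U" unfolding U_def
    using sub by (intro open_UN ballI continuous_open_preimage hdist_orbit_cont oH) auto
  moreover have "{z\<in>D. injrad_at \<Gamma> z < L} = D \<inter> U"
    using D injrad_facts(4)[OF sg ne] unfolding U_def Hplane_def by auto
  ultimately show ?thesis using D by auto
qed

lemma Lam_le:
  assumes t: "t \<ge> 1/200"
  shows "Lam t \<le> t * exp (12321/8 * t\<^sup>2) * exp 20001"
proof -
  have t0: "t > 0" using t by simp
  have "(1/200)\<^sup>2 \<le> t\<^sup>2" using t by (intro power_mono) auto
  hence t2: "1/40000 \<le> t\<^sup>2" by (simp add: power2_eq_square)
  hence "1 / (2 * t\<^sup>2) \<le> 20000" using t0 by (simp add: divide_le_eq) 
  hence "(111/2)\<^sup>2 * t\<^sup>2 / 2 + 1 / (2 * t\<^sup>2) + 1 \<le> 12321/8 * t\<^sup>2 + 20001"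
    by (simp add: power2_eq_square)
  hence "exp ((111/2)\<^sup>2 * t\<^sup>2 / 2 + 1 / (2 * t\<^sup>2) + 1) \<le> exp (12321/8 * t\<^sup>2 + 20001)" by simp
  hence "Lam t \<le> t * exp (12321/8 * t\<^sup>2 + 20001)" unfolding Lam_def using t0 by (intro mult_left_mono) auto
  also have "\<dots> = t * exp (12321/8 * t\<^sup>2) * exp 20001" by (simp add: exp_add)
  finally show ?thesis .
qed

lemma final_num:
  assumes t: "t \<ge> 1/200" and r: "0 < r" "r < 3" and L: "L \<ge> 2^12 * t\<^sup>2"
    and Cc: "Cc \<ge> 0" and E: "E \<ge> exp (- (t\<^sup>2 / 16))"
  shows "Cc * Lam t * exp (- 3 * (2 * L) / 4) / r^3 \<le> (120000 * Cc * exp 20001) * (t^3 / r^4 * E) * exp (- L)"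
    and "Cc * Lam t * exp (- 3 * (2 * r) / 4) / r^3 \<le> (120000 * Cc * exp 20001) * (t^3 / r^4 * E) * exp L"
proof -
  have t0: "t > 0" using t by simp
  have "(1/200)\<^sup>2 \<le> t\<^sup>2" using t by (intro power_mono) auto
  hence t2: "1/40000 \<le> t\<^sup>2" by (simp add: power2_eq_square)
  have r3: "r \<le> 120000 * t\<^sup>2" using t2 r by simp
  define G where "G = Cc * exp 20001 * t / r^4"
  have G: "G \<ge> 0" unfolding G_def using Cc t0 r by simp
  have LamB: "Lam t \<le> t * exp (12321/8 * t\<^sup>2) * exp 20001" by (rule Lam_le[OF t])
  have r4: "r^4 = r^3 * r" by (simp add: power_Suc2 numeral_eq_Suc)
  have key: "Cc * Lam t * Z / r^3 \<le> G * (r * (exp (12321/8 * t\<^sup>2) * Z))" if Z: "Z \<ge> 0" for Z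
  proof -
    have "Cc * Lam t * Z / r^3 \<le> Cc * (t * exp (12321/8 * t\<^sup>2) * exp 20001) * Z / r^3"
      using LamB Cc Z r by (intro divide_right_mono mult_right_mono mult_left_mono) auto
    also have "\<dots> = G * (r * (exp (12321/8 * t\<^sup>2) * Z))" unfolding G_def r4 using r by (simp add: field_simps)
    finally show ?thesis .
  qed
  have E0: "E \<ge> 0" using E by (smt (verit) exp_gt_zero)
  have EX: "exp (- (t\<^sup>2 / 16)) * W \<le> E * W" if "W \<ge> 0" for W using E that by (intro mult_right_mono)
  show "Cc * Lam t * exp (- 3 * (2 * L) / 4) / r^3 \<le> (120000 * Cc * exp 20001) * (t^3 / r^4 * E) * exp (- L)"
  proof -
    have "Cc * Lam t * exp (- 3 * (2 * L) / 4) / r^3 \<le> G * (r * (exp (12321/8 * t\<^sup>2) * exp (- 3 * (2 * L) / 4)))"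
      by (rule key) simp
    also have "exp (12321/8 * t\<^sup>2) * exp (- 3 * (2 * L) / 4) \<le> exp (- (t\<^sup>2 / 16)) * exp (- L)"
    proof -
      have "12321/8 * t\<^sup>2 + (- 3 * (2 * L) / 4) \<le> - (t\<^sup>2 / 16) + (- L)" using L zero_le_power2[of t] by (simp, linarith)
      then show ?thesis by (simp flip: exp_add)
    qed
    hence "G * (r * (exp (12321/8 * t\<^sup>2) * exp (- 3 * (2 * L) / 4))) \<le> G * (r * (exp (- (t\<^sup>2 / 16)) * exp (- L)))"
      using G r by (intro mult_left_mono) auto
    also have "\<dots> \<le> G * ((120000 * t\<^sup>2) * (E * exp (- L)))"
      using G r3 E0 EX[of "exp (- L)"] by (intro mult_left_mono mult_mono) auto
    also have "\<dots> = (120000 * Cc * exp 20001) * (t^3 / r^4 * E) * exp (- L)"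
      unfolding G_def by (simp add: power2_eq_square power3_eq_cube field_simps)
    finally show ?thesis by simp
  qed
  show "Cc * Lam t * exp (- 3 * (2 * r) / 4) / r^3 \<le> (120000 * Cc * exp 20001) * (t^3 / r^4 * E) * exp L"
  proof -
    have "Cc * Lam t * exp (- 3 * (2 * r) / 4) / r^3 \<le> G * (r * (exp (12321/8 * t\<^sup>2) * exp (- 3 * (2 * r) / 4)))"
      by (rule key) simp
    also have "exp (12321/8 * t\<^sup>2) * exp (- 3 * (2 * r) / 4) \<le> exp (- (t\<^sup>2 / 16)) * exp L"
    proof -
      have "12321/8 * t\<^sup>2 + (- 3 * (2 * r) / 4) \<le> - (t\<^sup>2 / 16) + L" using L r zero_le_power2[of t] by (simp, linarith)
      then show ?thesis by (simp flip: exp_add)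
    qed
    hence "G * (r * (exp (12321/8 * t\<^sup>2) * exp (- 3 * (2 * r) / 4))) \<le> G * (r * (exp (- (t\<^sup>2 / 16)) * exp L))"
      using G r by (intro mult_left_mono) auto
    also have "\<dots> \<le> G * ((120000 * t\<^sup>2) * (E * exp L))"
      using G r3 E0 EX[of "exp L"] by (intro mult_left_mono mult_mono) auto
    also have "\<dots> = (120000 * Cc * exp 20001) * (t^3 / r^4 * E) * exp L"
      unfolding G_def by (simp add: power2_eq_square power3_eq_cube field_simps)
    finally show ?thesis by simp
  qed
qed

theorem lemma3p7:
  shows "\<exists>C::real. \<forall>(\<Gamma>::(complex \<Rightarrow> complex) set) (D::complex set) (a::real) (b::real) (r::real) (t::real) (L::real).
     fuchsian \<Gamma> \<and> cocompact \<Gamma> \<and> fundamental_domain \<Gamma> D \<and>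
     0 \<le> a \<and> a \<le> b \<and> b \<le> 1 \<and> 0 < r \<and> r < 3 \<and> injrad \<Gamma> > r \<and>
     t \<ge> 1/200 \<and> L \<ge> 2^12 * t\<^sup>2 \<longrightarrow>
     cmod (R_K \<Gamma> D t a b) \<le>
       C * (t^3 / r^4 * exp (- (t\<^sup>2 * (max (1/4 - b) 0)\<^sup>2)) *
            (exp (- L) + vol_thin \<Gamma> D L / volX D * exp L))"
proof -
  define Cc :: real where "Cc = 4 * (6600 * exp 5 * (7/3) * exp (3/4))"
  define C :: real where "C = 120000 * Cc * exp 20001"
  have Cc0: "Cc \<ge> 0" unfolding Cc_def by simp
  have C0: "C \<ge> 0" unfolding C_def Cc_def by simp
  show ?thesis
  proof (intro exI[of _ C] allI impI)
    fix \<Gamma> :: "(complex \<Rightarrow> complex) set" and D :: "complex set" and a b r t L :: real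
    assume H: "fuchsian \<Gamma> \<and> cocompact \<Gamma> \<and> fundamental_domain \<Gamma> D \<and>
     0 \<le> a \<and> a \<le> b \<and> b \<le> 1 \<and> 0 < r \<and> r < 3 \<and> injrad \<Gamma> > r \<and>
     t \<ge> 1/200 \<and> L \<ge> 2^12 * t\<^sup>2"
    have sg: "subgroup_PSL2 \<Gamma>" using H unfolding fuchsian_def by auto
    have fd: "D \<in> sets borel" "D \<subseteq> Hplane" using H unfolding fundamental_domain_def by auto
    have ab: "0 \<le> a" "a \<le> b" "b \<le> 1" and r: "0 < r" "r < 3" and ir: "injrad \<Gamma> > r"
      and t: "t \<ge> 1/200" and L: "L \<ge> 2^12 * t\<^sup>2" using H by auto
    have t0: "t > 0" using t by simp
    have "0 < (2::real)^12 * t\<^sup>2" using t0 by simp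
    hence L0: "L > 0" using L by linarith
    define E where "E = exp (- (t\<^sup>2 * (max (1/4 - b) 0)\<^sup>2))"
    define v where "v = vol_thin \<Gamma> D L / volX D"
    define f where "f = (\<lambda>z. infsum (\<lambda>\<gamma>. K_t a b t (hdist z (\<gamma> z))) (\<Gamma> - {id}))"
    have E0: "E \<ge> exp (- (t\<^sup>2 / 16))"
    proof -
      have "max (1/4 - b) 0 \<le> 1/4" "0 \<le> max (1/4 - b) 0" using ab by (auto simp: max_def)
      hence "(max (1/4 - b) 0)\<^sup>2 \<le> (1/4)\<^sup>2" by (intro power_mono) auto
      hence "t\<^sup>2 * (max (1/4 - b) 0)\<^sup>2 \<le> t\<^sup>2 * (1/4)\<^sup>2" by (intro mult_left_mono) auto
      thus ?thesis unfolding E_def by (simp add: power2_eq_square)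
    qed
    have Epos: "E > 0" unfolding E_def by simp
    have v0: "v \<ge> 0" unfolding v_def vol_thin_def volX_def by simp
    have RHS0: "0 \<le> C * (t^3 / r^4 * E * (exp (- L) + v * exp L))"
      using C0 t0 r Epos v0 by (intro mult_nonneg_nonneg add_nonneg_nonneg) auto
    have RK: "R_K \<Gamma> D t a b = complex_of_real (1 / volX D) * (LINT z:D|muH. f z)"
      unfolding R_K_def f_def ..
    have goal: "cmod (R_K \<Gamma> D t a b) \<le> C * (t^3 / r^4 * E * (exp (- L) + v * exp L))"
    proof (cases "\<Gamma> - {id} = {} \<or> volX D = 0")
      case True
      have "R_K \<Gamma> D t a b = 0"
      proof (cases "\<Gamma> - {id} = {}")
        case True
        then have "f = (\<lambda>z. 0)" unfolding f_def by (simp only: infsum_empty)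
        then show ?thesis unfolding RK by simp
      next
        case False
        with \<open>\<Gamma> - {id} = {} \<or> volX D = 0\<close> have "volX D = 0" by simp
        then show ?thesis unfolding RK by simp
      qed
      then show ?thesis using RHS0 by simp
    next
      case False
      hence ne: "\<Gamma> - {id} \<noteq> {}" and V0: "volX D \<noteq> 0" by auto
      have Vpos: "volX D > 0" using V0 unfolding volX_def by (simp add: order_le_neq_trans)
      have fin: "emeasure muH D < \<infinity>"
      proof (rule ccontr)
        assume "\<not> emeasure muH D < \<infinity>"
        hence "emeasure muH D = \<infinity>" using less_top[of "emeasure muH D"] by auto
        hence "volX D = 0" unfolding volX_def measure_def by simp
        with V0 show False by simp
      qed
      define T where "T = {z\<in>D. injrad_at \<Gamma> z < L}"
      have Tb: "T \<in> sets borel" unfolding T_def by (rule thin_set_borel[OF sg ne fd])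
      have TD: "T \<subseteq> D" unfolding T_def by auto
      define P1 where "P1 = Cc * Lam t * exp (- 3 * (2 * L) / 4) / r^3"
      define P2 where "P2 = Cc * Lam t * exp (- 3 * (2 * r) / 4) / r^3"
      have Lpos: "Lam t > 0" by (rule Lam_pos[OF t0])
      have P0: "0 \<le> P1" "0 \<le> P2" unfolding P1_def P2_def using Cc0 Lpos r by auto
      have conv: "4 * Lam t / r * (6600 * exp 5 * (7/3) * exp (3/4) * exp (- 3 * m / 4) / r\<^sup>2)
                 = Cc * Lam t * exp (- 3 * m / 4) / r^3" for m
        unfolding Cc_def using r by (simp add: power2_eq_square power3_eq_cube field_simps)
      have bnd: "cmod (f z) \<le> P1 + (if z \<in> T then P2 else 0)" if zD: "z \<in> D" for z
      proof -
        have z: "Im z > 0" using fd zD unfolding Hplane_def by auto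
        note IF = injrad_facts[OF sg ne z]
        have ia: "injrad_at \<Gamma> z > r" using IF(3) ir by simp
        have dgt: "hdist z (\<gamma> z) \<ge> 2 * injrad_at \<Gamma> z" if "\<gamma> \<in> \<Gamma> - {id}" for \<gamma> using IF(1)[OF that] .
        show ?thesis
        proof (cases "z \<in> T")
          case True
          have "cmod (f z) \<le> 4 * Lam t / r * (6600 * exp 5 * (7/3) * exp (3/4) * exp (- 3 * (2 * r) / 4) / r\<^sup>2)"
            unfolding f_def
          proof (rule pointwise_bound[OF ab t0 sg z r])
            show "0 < 2 * r" using r by simp
            fix \<gamma> assume g: "\<gamma> \<in> \<Gamma> - {id}"
            have "2 * injrad_at \<Gamma> z \<le> hdist z (\<gamma> z)" by (rule dgt[OF g])
            then show "2 * r < hdist z (\<gamma> z) \<and> 2 * r \<le> hdist z (\<gamma> z)" using ia by linarith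
          qed
          also have "\<dots> = P2" unfolding conv P2_def ..
          finally show ?thesis using True P0 by simp
        next
          case False
          hence iaL: "injrad_at \<Gamma> z \<ge> L" unfolding T_def using zD by auto
          have "cmod (f z) \<le> 4 * Lam t / r * (6600 * exp 5 * (7/3) * exp (3/4) * exp (- 3 * (2 * L) / 4) / r\<^sup>2)"
            unfolding f_def
          proof (rule pointwise_bound[OF ab t0 sg z r])
            show "0 < 2 * L" using L0 by simp
            fix \<gamma> assume g: "\<gamma> \<in> \<Gamma> - {id}"
            show "2 * r < hdist z (\<gamma> z) \<and> 2 * L \<le> hdist z (\<gamma> z)"
              using dgt[OF g] ia iaL by auto
          qed
          also have "\<dots> = P1" unfolding conv P1_def ..
          finally show ?thesis using False by simp
        qed
      qed
      have I: "cmod (LINT z:D|muH. f z) \<le> P1 * volX D + P2 * vol_thin \<Gamma> D L"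
        unfolding volX_def vol_thin_def using integral_bound_muH[OF fd(1) Tb TD fin P0 bnd]
        unfolding T_def by simp
      have "cmod (R_K \<Gamma> D t a b) = (1 / volX D) * cmod (LINT z:D|muH. f z)"
        unfolding RK norm_mult norm_of_real using Vpos by simp
      also have "\<dots> \<le> (1 / volX D) * (P1 * volX D + P2 * vol_thin \<Gamma> D L)"
        using Vpos I by (intro mult_left_mono) auto
      also have "\<dots> = P1 + P2 * v" unfolding v_def using Vpos by (simp add: field_simps)
      also have "\<dots> \<le> C * (t^3 / r^4 * E) * exp (- L) + C * (t^3 / r^4 * E) * exp L * v"
      proof (intro add_mono mult_right_mono v0)
        show "P1 \<le> C * (t^3 / r^4 * E) * exp (- L)"
          unfolding P1_def C_def by (rule final_num(1)[OF t r L Cc0 E0])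
        show "P2 \<le> C * (t^3 / r^4 * E) * exp L"
          unfolding P2_def C_def by (rule final_num(2)[OF t r L Cc0 E0])
      qed
      also have "\<dots> = C * (t^3 / r^4 * E * (exp (- L) + v * exp L))" by (simp add: algebra_simps add_divide_distrib)
      finally show ?thesis .
    qed
    then show "cmod (R_K \<Gamma> D t a b) \<le>
       C * (t^3 / r^4 * exp (- (t\<^sup>2 * (max (1/4 - b) 0)\<^sup>2)) *
            (exp (- L) + vol_thin \<Gamma> D L / volX D * exp L))"
      unfolding E_def v_def .
  qed
qed

end
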